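(* If $X$ is a minimally $4$-rigid $3$-dimensional normal pseudomanifold, then $X$ is a stacked $3$-sphere.
   Context: A simplicial complex is a finite set of finite sets closed under taking subsets; an element of size $i+1$ is an $i$-face (the empty set is the unique $(-1)$-face); 1-faces are edges; $V(X)$ is the vertex set. A pure $d$-dimensional complex has all maximal faces (facets) of dimension $d$. The link of a face $\alpha$ is $\mathrm{lk}_X(\alpha)=\{\beta\in X:\beta\cap\alpha=\emptyset,\ \alpha\cup\beta\in X\}$. A $d$-dimensional normal pseudomanifold ($d\ge1$) is a pure $d$-dimensional simplicial complex in which every $(d-1)$-face lies in exactly two facets and the link of every face of dimension $\le d-2$ (including the empty face) is connected. For a positive integer $q$, a $d$-dimensional simplicial complex $X$ is $q$-rigid if $X$ is connected and for every $A\subseteq V(X)$ disjoint from at least one $d$-face of $X$, the number of edges of $X$ meeting $A$ is at least $q\cdot\#(A)$. An $n$-vertex $d$-dimensional complex is minimally $q$-rigid if it is $q$-rigid and has exactly $(n-d-1)q+\binom{d+1}{2}$ edges. The standard $d$-sphere $S^d_{d+2}$ is the complex of all proper subsets of a $(d+2)$-set. Starring a new vertex $v$ in a facet $\sigma$ of a pure $d$-dimensional complex replaces $\sigma$ by the facets $\tau\cup\{v\}$, $\tau$ a $(d-1)$-face of $\sigma$. A stacked $d$-sphere is a complex obtained from $S^d_{d+2}$ by finitely many such starrings. *)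

theory Defs
  imports Main
begin

text \<open>Simplicial complexes as finite sets of finite sets closed under subsets.
  A face \<sigma> has dimension card \<sigma> - 1, so an i-face has card i+1.\<close>

definition simplicial_complex :: "'a set set \<Rightarrow> bool" where
  "simplicial_complex X \<longleftrightarrow> finite X \<and> (\<forall>\<sigma>\<in>X. finite \<sigma>) \<and> (\<forall>\<sigma>\<in>X. \<forall>\<tau>. \<tau> \<subseteq> \<sigma> \<longrightarrow> \<tau> \<in> X)"

definition vertices :: "'a set set \<Rightarrow> 'a set" where
  "vertices X = \<Union>X"

definition edges :: "'a set set \<Rightarrow> 'a set set" where
  "edges X = {e \<in> X. card e = 2}"

definition link :: "'a set set \<Rightarrow> 'a set \<Rightarrow> 'a set set" where
  "link X \<alpha> = {\<beta> \<in> X. \<beta> \<inter> \<alpha> = {} \<and> \<alpha> \<union> \<beta> \<in> X}"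

definition connected_complex :: "'a set set \<Rightarrow> bool" where
  "connected_complex X \<longleftrightarrow>
     (\<forall>u\<in>vertices X. \<forall>v\<in>vertices X. (u, v) \<in> {(x, y). {x, y} \<in> edges X}\<^sup>*)"

definition facets :: "'a set set \<Rightarrow> 'a set set" where
  "facets X = {\<sigma> \<in> X. \<forall>\<tau>\<in>X. \<sigma> \<subseteq> \<tau> \<longrightarrow> \<tau> = \<sigma>}"

definition pure_dim :: "nat \<Rightarrow> 'a set set \<Rightarrow> bool" where
  "pure_dim d X \<longleftrightarrow> facets X \<noteq> {} \<and> (\<forall>\<sigma>\<in>facets X. card \<sigma> = d + 1)"

definition normal_pseudomanifold :: "nat \<Rightarrow> 'a set set \<Rightarrow> bool" where
  "normal_pseudomanifold d X \<longleftrightarrow>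
     d \<ge> 1 \<and> simplicial_complex X \<and> pure_dim d X \<and>
     (\<forall>\<sigma>\<in>X. card \<sigma> = d \<longrightarrow> card {\<tau> \<in> facets X. \<sigma> \<subseteq> \<tau>} = 2) \<and>
     (\<forall>\<alpha>\<in>X. card \<alpha> + 1 \<le> d \<longrightarrow> connected_complex (link X \<alpha>))"

definition rigid :: "nat \<Rightarrow> nat \<Rightarrow> 'a set set \<Rightarrow> bool" where
  "rigid q d X \<longleftrightarrow> connected_complex X \<and>
     (\<forall>A. A \<subseteq> vertices X \<longrightarrow> (\<exists>\<sigma>\<in>X. card \<sigma> = d + 1 \<and> A \<inter> \<sigma> = {}) \<longrightarrow>
        card {e \<in> edges X. e \<inter> A \<noteq> {}} \<ge> q * card A)"

definition minimally_rigid :: "nat \<Rightarrow> nat \<Rightarrow> 'a set set \<Rightarrow> bool" where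
  "minimally_rigid q d X \<longleftrightarrow> rigid q d X \<and>
     int (card (edges X)) = (int (card (vertices X)) - int d - 1) * int q + int ((d + 1) choose 2)"

definition standard_sphere :: "'a set \<Rightarrow> 'a set set" where
  "standard_sphere S = {\<sigma>. \<sigma> \<subset> S}"

definition star_vertex :: "'a set set \<Rightarrow> 'a set \<Rightarrow> 'a \<Rightarrow> 'a set set" where
  "star_vertex X \<sigma> v = (X - {\<sigma>}) \<union> {insert v \<tau> | \<tau>. \<tau> \<subset> \<sigma>}"

text \<open>Stacked d-spheres (closed under relabelling of vertices, since the base sphere
  may sit on any (d+2)-set and new vertices are arbitrary fresh labels).\<close>
inductive_set stacked_sphere :: "nat \<Rightarrow> 'a set set set" for d :: nat where
  base: "finite S \<Longrightarrow> card S = d + 2 \<Longrightarrow> standard_sphere S \<in> stacked_sphere d"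
| star: "X \<in> stacked_sphere d \<Longrightarrow> \<sigma> \<in> facets X \<Longrightarrow> card \<sigma> = d + 1 \<Longrightarrow> v \<notin> vertices X
         \<Longrightarrow> star_vertex X \<sigma> v \<in> stacked_sphere d"

end

theory Submission
  imports Defs
begin


lemma even_involution:
  assumes "finite S" "\<forall>z\<in>S. f z \<in> S \<and> f (f z) = z \<and> f z \<noteq> z"
  shows "even (card S)"
  using assms
proof (induction "card S" arbitrary: S rule: less_induct)
  case less
  show ?case
  proof (cases "S = {}")
    case True then show ?thesis by simp
  next
    case False
    then obtain z where z: "z \<in> S" by blast
    let ?S' = "S - {z, f z}"
    have fz: "f z \<in> S" "f z \<noteq> z" using less.prems z by auto
    have sub: "{z, f z} \<subseteq> S" using z fz by auto
    have "card {z, f z} \<le> card S" using card_mono[OF less.prems(1) sub] .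
    then have c: "card S = card ?S' + 2"
      using less.prems(1) sub fz by (simp add: card_Diff_subset)
    have "even (card ?S')"
    proof (rule less.hyps)
      show "card ?S' < card S" using c by simp
      show "finite ?S'" using less.prems by simp
      show "\<forall>y\<in>?S'. f y \<in> ?S' \<and> f (f y) = y \<and> f y \<noteq> y"
      proof
        fix y assume y: "y \<in> ?S'"
        then have y1: "y \<in> S" "y \<noteq> z" "y \<noteq> f z" by auto
        have p: "f y \<in> S" "f (f y) = y" "f y \<noteq> y" using less.prems(2) y1(1) by auto
        have "f y \<noteq> z" using p(2) y1(3) by auto
        moreover have "f y \<noteq> f z" using p(2) y1(2) less.prems(2) z by metis
        ultimately show "f y \<in> ?S' \<and> f (f y) = y \<and> f y \<noteq> y" using p by auto
      qed
    qed
    then show ?thesis using c by simp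
  qed
qed

lemma parity_contra:
  fixes adj :: "'b \<Rightarrow> 'b \<Rightarrow> bool"
  assumes fin: "finite K" and xK: "x \<notin> K"
    and sym: "\<And>a b. adj a b \<Longrightarrow> adj b a"
    and irr: "\<And>a. \<not> adj a a"
    and deg: "\<And>k. k \<in> K \<Longrightarrow> card {w. adj k w} = 2"
    and clo: "\<And>k w. k \<in> K \<Longrightarrow> adj k w \<Longrightarrow> w \<in> K \<or> w = x"
    and one: "card {k\<in>K. adj k x} = 1"
  shows False
proof -
  let ?P = "{(k,w). k \<in> K \<and> w \<in> K \<and> adj k w}"
  have finP: "finite ?P"
    by (rule finite_subset[of _ "K \<times> K"]) (auto simp: fin)
  have "even (card ?P)"
    by (rule even_involution[where f = "\<lambda>(a,b). (b,a)"]) (use finP sym irr in auto)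
  moreover have "card ?P = (\<Sum>k\<in>K. card {w\<in>K. adj k w})"
  proof -
    have "?P = (SIGMA k:K. {w\<in>K. adj k w})" by auto
    then show ?thesis using fin by (simp add: card_SigmaI)
  qed
  moreover have "\<And>k. k \<in> K \<Longrightarrow> card {w\<in>K. adj k w} + (if adj k x then 1 else 0) = 2"
  proof -
    fix k assume k: "k \<in> K"
    have fin2: "finite {w. adj k w}" using deg[OF k] by (metis card.infinite zero_neq_numeral)
    have e: "{w. adj k w} = {w\<in>K. adj k w} \<union> (if adj k x then {x} else {})"
      using clo[OF k] by auto
    have "card {w. adj k w} = card {w\<in>K. adj k w} + card (if adj k x then {x} else {})"
      unfolding e
      by (rule card_Un_disjoint) (use fin xK in auto)
    then show "card {w\<in>K. adj k w} + (if adj k x then 1 else 0) = 2"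
      using deg[OF k] by (auto split: if_splits)
  qed
  then have s1: "(\<Sum>k\<in>K. card {w\<in>K. adj k w}) + (\<Sum>k\<in>K. (if adj k x then 1 else 0)) = (\<Sum>k\<in>K. (2::nat))"
    by (simp add: sum.distrib[symmetric])
  have s2: "(\<Sum>k\<in>K. (if adj k x then 1 else 0::nat)) = card {k\<in>K. adj k x}"
  proof -
    have "{k\<in>K. adj k x} = K \<inter> {k. adj k x}" by auto
    then show ?thesis using fin by (simp add: sum.If_cases)
  qed
  ultimately have e: "even (card ?P)" and c0: "card ?P = (\<Sum>k\<in>K. card {w\<in>K. adj k w})"
    by blast+
  have c: "card ?P + 1 = 2 * card K"
    using s1 s2 one c0 by simp
  have "even (card ?P + 1)" unfolding c by simp
  then show False using e by simp
qed

lemma crossing: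
  assumes "(a,b) \<in> R\<^sup>*" "a \<in> S" "b \<notin> S"
  shows "\<exists>x y. (x,y) \<in> R \<and> x \<in> S \<and> y \<notin> S"
  using assms by (induction rule: rtrancl_induct) auto

lemma closure_rt:
  assumes "(a,b) \<in> R\<^sup>*" "a \<in> S" "\<And>x y. (x,y) \<in> R \<Longrightarrow> x \<in> S \<Longrightarrow> y \<in> S"
  shows "b \<in> S"
  using assms by (induction rule: rtrancl_induct) auto

lemma del_conn_aux:
  assumes "(a,c) \<in> R\<^sup>*" "a \<noteq> u"
    and h1: "\<And>x y. (x,y) \<in> R \<Longrightarrow> x \<noteq> u \<Longrightarrow> y \<noteq> u \<Longrightarrow> (x,y) \<in> R'"
    and h2: "\<And>x y. (x,u) \<in> R \<Longrightarrow> (u,y) \<in> R \<Longrightarrow> x \<noteq> u \<Longrightarrow> y \<noteq> u \<Longrightarrow> x \<noteq> y \<Longrightarrow> (x,y) \<in> R'"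
  shows "(c \<noteq> u \<longrightarrow> (a,c) \<in> R'\<^sup>*) \<and> (c = u \<longrightarrow> (\<exists>a'. (a,a') \<in> R'\<^sup>* \<and> (a',u) \<in> R \<and> a' \<noteq> u))"
  using assms(1)
proof (induction rule: rtrancl_induct)
  case base then show ?case using assms(2) by simp
next
  case (step c d)
  show ?case
  proof (cases "c = u")
    case False
    then have ac: "(a,c) \<in> R'\<^sup>*" using step.IH by simp
    show ?thesis
    proof (cases "d = u")
      case True then show ?thesis using ac step.hyps(2) False by auto
    next
      case False
      then have "(c,d) \<in> R'" using h1 step.hyps(2) \<open>c \<noteq> u\<close> by blast
      then show ?thesis using ac False by auto
    qed
  next
    case True
    then obtain a' where a': "(a,a') \<in> R'\<^sup>*" "(a',u) \<in> R" "a' \<noteq> u" using step.IH by auto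
    show ?thesis
    proof (cases "d = u")
      case True then show ?thesis using a' by auto
    next
      case False
      show ?thesis
      proof (cases "a' = d")
        case True then show ?thesis using a' False by auto
      next
        case ne: False
        have "(a',d) \<in> R'" using h2[OF a'(2)] step.hyps(2) \<open>c = u\<close> a'(3) False ne by blast
        then show ?thesis using a' False by auto
      qed
    qed
  qed
qed

lemma del_conn:
  assumes "(a,c) \<in> R\<^sup>*" "a \<noteq> u" "c \<noteq> u"
    and "\<And>x y. (x,y) \<in> R \<Longrightarrow> x \<noteq> u \<Longrightarrow> y \<noteq> u \<Longrightarrow> (x,y) \<in> R'"
    and "\<And>x y. (x,u) \<in> R \<Longrightarrow> (u,y) \<in> R \<Longrightarrow> x \<noteq> u \<Longrightarrow> y \<noteq> u \<Longrightarrow> x \<noteq> y \<Longrightarrow> (x,y) \<in> R'"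
  shows "(a,c) \<in> R'\<^sup>*"
  using del_conn_aux[OF assms(1,2,4,5)] assms(3) by blast



definition lkv :: "'a set set \<Rightarrow> 'a set \<Rightarrow> 'a set" where
  "lkv X \<alpha> = {y. y \<notin> \<alpha> \<and> insert y \<alpha> \<in> X}"

definition lrel :: "'a set set \<Rightarrow> 'a set \<Rightarrow> ('a \<times> 'a) set" where
  "lrel X \<alpha> = {(x,y). x \<noteq> y \<and> x \<notin> \<alpha> \<and> y \<notin> \<alpha> \<and> insert x (insert y \<alpha>) \<in> X}"

lemma sc_sub: "simplicial_complex X \<Longrightarrow> \<sigma> \<in> X \<Longrightarrow> \<tau> \<subseteq> \<sigma> \<Longrightarrow> \<tau> \<in> X"
  unfolding simplicial_complex_def by blast

lemma sc_fin: "simplicial_complex X \<Longrightarrow> \<sigma> \<in> X \<Longrightarrow> finite \<sigma>"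
  unfolding simplicial_complex_def by blast

lemma conn_link:
  assumes sc: "simplicial_complex X" and c: "connected_complex (link X \<alpha>)"
    and x: "x \<in> lkv X \<alpha>" and y: "y \<in> lkv X \<alpha>"
  shows "(x,y) \<in> (lrel X \<alpha>)\<^sup>*"
proof -
  have vx: "x \<in> vertices (link X \<alpha>)" using x unfolding lkv_def vertices_def link_def
    using sc_sub[OF sc] by (auto intro!: exI[of _ "{x}"])
  have vy: "y \<in> vertices (link X \<alpha>)" using y unfolding lkv_def vertices_def link_def
    using sc_sub[OF sc] by (auto intro!: exI[of _ "{y}"])
  have "(x,y) \<in> {(a, b). {a, b} \<in> edges (link X \<alpha>)}\<^sup>*"
    using c vx vy unfolding connected_complex_def by blast
  moreover have "{(a, b). {a, b} \<in> edges (link X \<alpha>)} \<subseteq> lrel X \<alpha>"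
  proof
    fix p assume "p \<in> {(a, b). {a, b} \<in> edges (link X \<alpha>)}"
    then obtain a b where p: "p = (a,b)" and e: "{a,b} \<in> edges (link X \<alpha>)" by auto
    have "card {a,b} = 2" using e unfolding edges_def by auto
    then have "a \<noteq> b" by (cases "a = b") auto
    then show "p \<in> lrel X \<alpha>" using e p unfolding edges_def link_def lrel_def by auto
  qed
  ultimately show ?thesis using rtrancl_mono by blast
qed

locale pm3 =
  fixes X :: "'a set set"
  assumes npm: "normal_pseudomanifold 3 X"
begin

lemma sc: "simplicial_complex X" using npm unfolding normal_pseudomanifold_def by auto
lemma finX: "finite X" using sc unfolding simplicial_complex_def by auto
lemma sub: "\<sigma> \<in> X \<Longrightarrow> \<tau> \<subseteq> \<sigma> \<Longrightarrow> \<tau> \<in> X" using sc_sub[OF sc] .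
lemma finF: "\<sigma> \<in> X \<Longrightarrow> finite \<sigma>" using sc_fin[OF sc] .
lemma pure: "pure_dim 3 X" using npm unfolding normal_pseudomanifold_def by auto

lemma in_facet: assumes "\<rho> \<in> X" shows "\<exists>\<sigma>\<in>X. card \<sigma> = 4 \<and> \<rho> \<subseteq> \<sigma>"
proof -
  obtain m where m: "m \<in> X" "\<rho> \<subseteq> m" "\<forall>b\<in>X. m \<subseteq> b \<longrightarrow> m = b"
    using finite_has_maximal2[OF finX assms] by auto
  then have "m \<in> facets X" unfolding facets_def by auto
  then have "card m = 4" using pure unfolding pure_dim_def by auto
  then show ?thesis using m by auto
qed

lemma card_le4: assumes "\<rho> \<in> X" shows "card \<rho> \<le> 4"
proof -
  obtain \<sigma> where "\<sigma> \<in> X" "card \<sigma> = 4" "\<rho> \<subseteq> \<sigma>" using in_facet[OF assms] by auto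
  then show ?thesis using card_mono[OF finF[OF \<open>\<sigma> \<in> X\<close>]] by auto
qed

lemma facets_eq: "facets X = {\<sigma>\<in>X. card \<sigma> = 4}"
proof
  show "facets X \<subseteq> {\<sigma>\<in>X. card \<sigma> = 4}" using pure unfolding pure_dim_def facets_def by auto
  show "{\<sigma>\<in>X. card \<sigma> = 4} \<subseteq> facets X"
  proof
    fix \<sigma> assume s: "\<sigma> \<in> {\<sigma>\<in>X. card \<sigma> = 4}"
    have "\<forall>\<tau>\<in>X. \<sigma> \<subseteq> \<tau> \<longrightarrow> \<tau> = \<sigma>"
    proof (intro ballI impI)
      fix \<tau> assume "\<tau> \<in> X" "\<sigma> \<subseteq> \<tau>"
      moreover have "card \<tau> \<le> 4" using card_le4 \<open>\<tau> \<in> X\<close> by auto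
      ultimately show "\<tau> = \<sigma>" using s finF card_seteq[of \<tau> \<sigma>] by auto
    qed
    then show "\<sigma> \<in> facets X" using s unfolding facets_def by auto
  qed
qed

lemma two: assumes "\<tau> \<in> X" "card \<tau> = 3" shows "card {\<sigma>\<in>X. card \<sigma> = 4 \<and> \<tau> \<subseteq> \<sigma>} = 2"
proof -
  have "card {\<sigma> \<in> facets X. \<tau> \<subseteq> \<sigma>} = 2" using npm assms unfolding normal_pseudomanifold_def by auto
  moreover have "{\<sigma> \<in> facets X. \<tau> \<subseteq> \<sigma>} = {\<sigma>\<in>X. card \<sigma> = 4 \<and> \<tau> \<subseteq> \<sigma>}" using facets_eq by auto
  ultimately show ?thesis by simp
qed

lemma link_conn: assumes "\<alpha> \<in> X" "card \<alpha> \<le> 2" "x \<in> lkv X \<alpha>" "y \<in> lkv X \<alpha>"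
  shows "(x,y) \<in> (lrel X \<alpha>)\<^sup>*"
proof -
  have "connected_complex (link X \<alpha>)" using npm assms(1,2) unfolding normal_pseudomanifold_def by auto
  then show ?thesis using conn_link[OF sc _ assms(3,4)] by blast
qed

lemma nonempty: "X \<noteq> {}" using pure unfolding pure_dim_def facets_def by auto
lemma empty_in: "{} \<in> X" using nonempty sub by blast

lemma vertices_iff: "x \<in> vertices X \<longleftrightarrow> {x} \<in> X"
  unfolding vertices_def using sub by auto

lemma finV: "finite (vertices X)" unfolding vertices_def using finX finF by auto

end



definition D :: "'a set set \<Rightarrow> 'a set set \<Rightarrow> ('a set \<times> 'a set) set" where
  "D Tr S = {(t,t'). t \<in> Tr \<and> t' \<in> Tr \<and> t \<noteq> t' \<and> t \<inter> t' \<in> S}"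

lemma dual_count:
  assumes finT: "finite Tr" and ne: "Tr \<noteq> {}" and finS: "finite S"
    and conn: "\<forall>t\<in>Tr. \<forall>t'\<in>Tr. (t,t') \<in> (D Tr S)\<^sup>*"
    and le2: "\<forall>e\<in>S. card {t\<in>Tr. e \<subseteq> t} \<le> 2"
  shows "card Tr \<le> card S + 1"
proof -
  define I where "I R = {e \<in> S. \<exists>t\<in>R. \<exists>t'\<in>R. t \<noteq> t' \<and> t \<inter> t' = e}" for R
  have claim: "1 \<le> k \<Longrightarrow> k \<le> card Tr \<Longrightarrow> (\<exists>R\<subseteq>Tr. card R = k \<and> k \<le> card (I R) + 1)" for k
  proof (induction k)
    case 0 then show ?case by simp
  next
    case (Suc k)
    show ?case
    proof (cases "k = 0")
      case True
      obtain t0 where "t0 \<in> Tr" using ne by auto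
      then show ?thesis using True by (intro exI[of _ "{t0}"]) auto
    next
      case False
      then obtain R where R: "R \<subseteq> Tr" "card R = k" "k \<le> card (I R) + 1" using Suc by auto
      have "R \<noteq> Tr" using R(2) Suc.prems by auto
      then obtain b where b: "b \<in> Tr" "b \<notin> R" using R(1) by auto
      have "R \<noteq> {}" using R(2) False by auto
      then obtain a where a: "a \<in> R" by auto
      have "(a,b) \<in> (D Tr S)\<^sup>*" using conn a b R(1) by auto
      then have "\<exists>x y. (x,y) \<in> D Tr S \<and> x \<in> R \<and> y \<notin> R"
        by (rule crossing) (use a b in auto)
      then obtain t t' where tt: "(t,t') \<in> D Tr S" "t \<in> R" "t' \<notin> R" by blast
      have t: "t \<in> Tr" "t' \<in> Tr" "t \<noteq> t'" "t \<inter> t' \<in> S" using tt(1) unfolding D_def by auto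
      let ?R = "insert t' R"
      define e where "e = t \<inter> t'"
      have e: "e \<subseteq> t" "e \<subseteq> t'" "e \<in> S" using t(4) unfolding e_def by auto
      have finR: "finite R" using R(1) finT finite_subset by auto
      have cR: "card ?R = Suc k" using R(2) tt(3) finR by simp
      have notin: "e \<notin> I R"
      proof
        assume "e \<in> I R"
        then obtain t1 t2 where t12: "t1 \<in> R" "t2 \<in> R" "t1 \<noteq> t2" "t1 \<inter> t2 = e" unfolding I_def by blast
        have "e \<subseteq> t1" "e \<subseteq> t2" using t12(4) by blast+
        then have "{t1,t2,t'} \<subseteq> {s\<in>Tr. e \<subseteq> s}" using t12(1,2) R(1) t(2) e(2) by blast
        moreover have "t' \<noteq> t1" "t' \<noteq> t2" using tt(3) t12(1,2) by blast+
        then have "card {t1,t2,t'} = 3" using t12(3) by simp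
        moreover have "finite {s\<in>Tr. e \<subseteq> s}" using finT by auto
        ultimately have "3 \<le> card {s\<in>Tr. e \<subseteq> s}"
          using card_mono[of "{s\<in>Tr. e \<subseteq> s}" "{t1,t2,t'}"] by simp
        moreover have "card {s\<in>Tr. e \<subseteq> s} \<le> 2" using le2 e(3) by blast
        ultimately show False by simp
      qed
      have sub: "insert e (I R) \<subseteq> I ?R"
      proof
        fix x assume "x \<in> insert e (I R)"
        then show "x \<in> I ?R"
        proof
          assume "x = e" then show ?thesis unfolding I_def using e(3) tt(2) t(3) e_def by blast
        next
          assume "x \<in> I R" then show ?thesis unfolding I_def by blast
        qed
      qed
      have finI: "finite (I ?R)" unfolding I_def using finS by auto
      have "card (insert e (I R)) \<le> card (I ?R)" using card_mono[OF finI sub] .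
      moreover have "finite (I R)" unfolding I_def using finS by auto
      then have "card (insert e (I R)) = Suc (card (I R))"
        using notin by simp
      ultimately have "Suc k \<le> card (I ?R) + 1" using R(3) by simp
      moreover have "?R \<subseteq> Tr" using R(1) t by simp
      ultimately show ?thesis using cR by blast
    qed
  qed
  obtain R where "R \<subseteq> Tr" "card R = card Tr" "card Tr \<le> card (I R) + 1"
  proof -
    have "1 \<le> card Tr" using ne finT by (simp add: Suc_leI card_gt_0_iff)
    then show ?thesis using claim[of "card Tr"] that by blast
  qed
  moreover have "card (I R) \<le> card S" by (rule card_mono[OF finS]) (auto simp: I_def)
  ultimately show ?thesis by simp
qed

lemma tri_inter:
  assumes "card t = 3" "card t' = 3" "t \<noteq> t'" "e \<subseteq> t" "e \<subseteq> t'" "card e = 2"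
  shows "t \<inter> t' = e"
proof -
  have fin: "finite t" "finite t'" using assms(1,2) card.infinite by fastforce+
  have "card (t \<inter> t') \<noteq> 3"
  proof
    assume c: "card (t \<inter> t') = 3"
    have "t \<inter> t' = t" using card_seteq[of t "t \<inter> t'"] fin c assms(1) by auto
    moreover have "t \<inter> t' = t'" using card_seteq[of t' "t \<inter> t'"] fin c assms(2) by auto
    ultimately show False using assms(3) by auto
  qed
  moreover have "card (t \<inter> t') \<le> 3" using card_mono[OF fin(1), of "t \<inter> t'"] assms(1) by auto
  ultimately have "card (t \<inter> t') \<le> 2" by auto
  moreover have "e \<subseteq> t \<inter> t'" using assms by auto
  ultimately show ?thesis using card_seteq[of "t \<inter> t'" e] fin assms(6) by auto
qed

context pm3 begin

lemma lkv_fin: "finite (lkv X \<alpha>)"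
proof -
  have "lkv X \<alpha> \<subseteq> vertices X" unfolding lkv_def vertices_def by auto
  then show ?thesis using finV finite_subset by auto
qed

lemma lkv_two: assumes "\<alpha> \<in> X" "card \<alpha> = 3" shows "card (lkv X \<alpha>) = 2"
proof -
  have fa: "finite \<alpha>" using finF assms(1) .
  have eq: "{\<sigma>\<in>X. card \<sigma> = 4 \<and> \<alpha> \<subseteq> \<sigma>} = (\<lambda>w. insert w \<alpha>) ` lkv X \<alpha>"
  proof
    show "{\<sigma>\<in>X. card \<sigma> = 4 \<and> \<alpha> \<subseteq> \<sigma>} \<subseteq> (\<lambda>w. insert w \<alpha>) ` lkv X \<alpha>"
    proof
      fix \<sigma> assume s: "\<sigma> \<in> {\<sigma>\<in>X. card \<sigma> = 4 \<and> \<alpha> \<subseteq> \<sigma>}"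
      have fs: "finite \<sigma>" using s finF by auto
      have "card (\<sigma> - \<alpha>) = 1" using s assms(2) fa card_Diff_subset[of \<alpha> \<sigma>] by auto
      then obtain w where w: "\<sigma> - \<alpha> = {w}" using card_1_singletonE by blast
      then have "\<sigma> = insert w \<alpha>" using s by auto
      moreover have "w \<in> lkv X \<alpha>" using w s \<open>\<sigma> = insert w \<alpha>\<close> unfolding lkv_def by auto
      ultimately show "\<sigma> \<in> (\<lambda>w. insert w \<alpha>) ` lkv X \<alpha>" by auto
    qed
    show "(\<lambda>w. insert w \<alpha>) ` lkv X \<alpha> \<subseteq> {\<sigma>\<in>X. card \<sigma> = 4 \<and> \<alpha> \<subseteq> \<sigma>}"
      unfolding lkv_def using assms(2) fa by auto
  qed
  have "inj_on (\<lambda>w. insert w \<alpha>) (lkv X \<alpha>)"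
    unfolding lkv_def inj_on_def by auto
  then have "card ((\<lambda>w. insert w \<alpha>) ` lkv X \<alpha>) = card (lkv X \<alpha>)" by (rule card_image)
  then show ?thesis using eq two[OF assms] by simp
qed

end



definition Tri :: "'a set set \<Rightarrow> 'a \<Rightarrow> 'a set set" where
  "Tri X s = {t. card t = 3 \<and> s \<notin> t \<and> insert s t \<in> X}"
definition Edg :: "'a set set \<Rightarrow> 'a \<Rightarrow> 'a set set" where
  "Edg X s = {e. card e = 2 \<and> s \<notin> e \<and> insert s e \<in> X}"

lemma two_subsets: assumes "card t = 3" shows "card {e. e \<subseteq> t \<and> card e = 2} = 3"
proof -
  have ft: "finite t" using assms card.infinite by fastforce
  have eq: "{e. e \<subseteq> t \<and> card e = 2} = (\<lambda>x. t - {x}) ` t"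
  proof
    show "{e. e \<subseteq> t \<and> card e = 2} \<subseteq> (\<lambda>x. t - {x}) ` t"
    proof
      fix e assume e: "e \<in> {e. e \<subseteq> t \<and> card e = 2}"
      then have "card (t - e) = 1" using ft assms card_Diff_subset[of e t] finite_subset by auto
      then obtain x where x: "t - e = {x}" using card_1_singletonE by blast
      then have "e = t - {x}" "x \<in> t" using e by auto
      then show "e \<in> (\<lambda>x. t - {x}) ` t" by auto
    qed
    show "(\<lambda>x. t - {x}) ` t \<subseteq> {e. e \<subseteq> t \<and> card e = 2}"
      using assms ft by auto
  qed
  have "inj_on (\<lambda>x. t - {x}) t" unfolding inj_on_def by auto
  then show ?thesis unfolding eq using card_image assms by metis
qed

lemma card2_neq: "card {a,b} = 2 \<Longrightarrow> a \<noteq> b" by (cases "a = b") auto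

context pm3 begin

lemma Tri_fin: "finite (Tri X s)"
  by (rule finite_subset[of _ X]) (auto simp: Tri_def finX intro: sub)
lemma Edg_fin: "finite (Edg X s)"
  by (rule finite_subset[of _ X]) (auto simp: Edg_def finX intro: sub)

lemma Edg_tris: assumes e: "e \<in> Edg X s"
  shows "{t\<in>Tri X s. e \<subseteq> t} = (\<lambda>w. insert w e) ` lkv X (insert s e)"
    and "card {t\<in>Tri X s. e \<subseteq> t} = 2"
proof -
  have e2: "card e = 2" "s \<notin> e" "insert s e \<in> X" using e unfolding Edg_def by auto
  have fe: "finite e" using e2(1) card.infinite by fastforce
  show eq: "{t\<in>Tri X s. e \<subseteq> t} = (\<lambda>w. insert w e) ` lkv X (insert s e)"
  proof
    show "{t\<in>Tri X s. e \<subseteq> t} \<subseteq> (\<lambda>w. insert w e) ` lkv X (insert s e)"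
    proof
      fix t assume t: "t \<in> {t\<in>Tri X s. e \<subseteq> t}"
      then have t3: "card t = 3" "s \<notin> t" "insert s t \<in> X" "e \<subseteq> t" unfolding Tri_def by auto
      have ft: "finite t" using t3(1) card.infinite by fastforce
      have "card (t - e) = 1" using t3 e2 fe card_Diff_subset[of e t] by auto
      then obtain w where w: "t - e = {w}" using card_1_singletonE by blast
      then have tw: "t = insert w e" using t3(4) by auto
      have "w \<notin> insert s e" using w t3(2) by auto
      moreover have "insert w (insert s e) \<in> X" using t3(3) tw by (simp add: insert_commute)
      ultimately show "t \<in> (\<lambda>w. insert w e) ` lkv X (insert s e)" using tw unfolding lkv_def by auto
    qed
    show "(\<lambda>w. insert w e) ` lkv X (insert s e) \<subseteq> {t\<in>Tri X s. e \<subseteq> t}"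
    proof
      fix t assume "t \<in> (\<lambda>w. insert w e) ` lkv X (insert s e)"
      then obtain w where w: "w \<notin> insert s e" "insert w (insert s e) \<in> X" "t = insert w e"
        unfolding lkv_def by auto
      have "card t = 3" using w(1,3) e2(1) fe by auto
      moreover have "insert s t \<in> X" using w(2,3) by (simp add: insert_commute)
      ultimately show "t \<in> {t\<in>Tri X s. e \<subseteq> t}" using w e2 unfolding Tri_def by auto
    qed
  qed
  have "inj_on (\<lambda>w. insert w e) (lkv X (insert s e))" unfolding inj_on_def lkv_def by auto
  then have "card ((\<lambda>w. insert w e) ` lkv X (insert s e)) = card (lkv X (insert s e))" by (rule card_image)
  moreover have "card (insert s e) = 3" using e2 fe by auto
  ultimately show "card {t\<in>Tri X s. e \<subseteq> t} = 2" unfolding eq using lkv_two e2(3) by simp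
qed

lemma Tri_edge: assumes "t \<in> Tri X s" "y \<in> t" "w \<in> t" "y \<noteq> w" shows "{y,w} \<in> Edg X s"
proof -
  have "insert s {y,w} \<subseteq> insert s t" using assms by auto
  then have "insert s {y,w} \<in> X" using sub assms(1) unfolding Tri_def by blast
  moreover have "s \<notin> {y,w}" using assms unfolding Tri_def by auto
  ultimately show ?thesis using assms(4) unfolding Edg_def by auto
qed

lemma lkv2_iff: assumes "y \<noteq> s" shows "w \<in> lkv X {s,y} \<longleftrightarrow> w \<noteq> y \<and> {y,w} \<in> Edg X s"
proof
  assume "w \<in> lkv X {s,y}"
  then show "w \<noteq> y \<and> {y,w} \<in> Edg X s" using assms unfolding lkv_def Edg_def by (auto simp: insert_commute)
next
  assume "w \<noteq> y \<and> {y,w} \<in> Edg X s"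
  then show "w \<in> lkv X {s,y}" using assms unfolding lkv_def Edg_def by (auto simp: insert_commute)
qed

lemma lrel2_tri: assumes "(w,w') \<in> lrel X {s,y}" "y \<noteq> s" shows "{y,w,w'} \<in> Tri X s"
proof -
  have h: "w \<noteq> w'" "w \<notin> {s,y}" "w' \<notin> {s,y}" "insert w (insert w' {s,y}) \<in> X"
    using assms(1) unfolding lrel_def by auto
  have "insert s {y,w,w'} = insert w (insert w' {s,y})" by auto
  then show ?thesis using h assms(2) unfolding Tri_def by auto
qed

lemma lrel_sym: "(a,b) \<in> lrel X \<alpha> \<Longrightarrow> (b,a) \<in> lrel X \<alpha>"
  unfolding lrel_def by (auto simp: insert_commute)

lemma lrel_deg: assumes "w \<in> lkv X {s,y}" "y \<noteq> s"
  shows "card {w'. (w,w') \<in> lrel X {s,y}} = 2"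
proof -
  have eq: "{w'. (w,w') \<in> lrel X {s,y}} = lkv X (insert w {s,y})"
    unfolding lrel_def lkv_def using assms(1) unfolding lkv_def by (auto simp: insert_commute)
  have "insert w {s,y} \<in> X" using assms(1) unfolding lkv_def by auto
  moreover have "card (insert w {s,y}) = 3" using assms unfolding lkv_def by auto
  ultimately show ?thesis unfolding eq using lkv_two by simp
qed

lemma share:
  assumes "t \<in> Tri X s" "t' \<in> Tri X s" "{y,w} \<subseteq> t" "{y,w} \<subseteq> t'" "{y,w} \<in> S" "y \<noteq> w"
  shows "(t,t') \<in> (D (Tri X s) S)\<^sup>*"
proof (cases "t = t'")
  case True then show ?thesis by simp
next
  case False
  have "t \<inter> t' = {y,w}"
    by (rule tri_inter) (use assms False in \<open>auto simp: Tri_def\<close>)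
  then have "(t,t') \<in> D (Tri X s) S" using assms False unfolding D_def by auto
  then show ?thesis by auto
qed

lemma around:
  assumes path: "(w1,w2) \<in> (lrel X {s,y} \<inter> {(a,b). {y,b} \<in> S})\<^sup>*"
    and w1: "{y,w1} \<in> S" and SE: "S \<subseteq> Edg X s" and ys: "y \<noteq> s"
    and t1: "t1 \<in> Tri X s" "{y,w1} \<subseteq> t1"
  shows "\<forall>t2\<in>Tri X s. {y,w2} \<subseteq> t2 \<longrightarrow> (t1,t2) \<in> (D (Tri X s) S)\<^sup>*"
  using path
proof (induction rule: rtrancl_induct)
  case base
  have "y \<noteq> w1" using w1 SE unfolding Edg_def by (auto dest: card2_neq)
  then show ?case using share[OF t1(1) _ t1(2) _ w1] by blast
next
  case (step w w')
  have ww: "(w,w') \<in> lrel X {s,y}" "{y,w'} \<in> S" using step.hyps(2) by auto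
  have T0: "{y,w,w'} \<in> Tri X s" using lrel2_tri[OF ww(1) ys] .
  have "(t1, {y,w,w'}) \<in> (D (Tri X s) S)\<^sup>*" using step.IH T0 by auto
  moreover have "y \<noteq> w'" using ww(2) SE unfolding Edg_def by (auto dest: card2_neq)
  ultimately show ?case using share[OF T0 _ _ _ ww(2)] by (meson insert_mono rtrancl_trans subset_insertI)
qed

end


context pm3 begin

lemma lrel_tgt: assumes "(a,b) \<in> lrel X \<alpha>" shows "b \<in> lkv X \<alpha>" "a \<in> lkv X \<alpha>"
proof -
  have h: "a \<notin> \<alpha>" "b \<notin> \<alpha>" "insert a (insert b \<alpha>) \<in> X" using assms unfolding lrel_def by auto
  have "insert b \<alpha> \<subseteq> insert a (insert b \<alpha>)" "insert a \<alpha> \<subseteq> insert a (insert b \<alpha>)" by auto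
  then show "b \<in> lkv X \<alpha>" "a \<in> lkv X \<alpha>" using h sub unfolding lkv_def by blast+
qed

lemma vertex_share:
  assumes t: "t \<in> Tri X s" "y \<in> t" and t': "t' \<in> Tri X s" "y \<in> t'"
  shows "(t,t') \<in> (D (Tri X s) (Edg X s))\<^sup>*"
proof -
  have t3: "card t = 3" "s \<notin> t" "insert s t \<in> X" using t unfolding Tri_def by auto
  have t3': "card t' = 3" using t' unfolding Tri_def by auto
  have ys: "y \<noteq> s" using t3(2) t(2) by auto
  have "\<exists>w\<in>t. w \<noteq> y"
  proof (rule ccontr)
    assume "\<not> ?thesis" then have "t \<subseteq> {y}" by auto
    then have "card t \<le> 1" by (metis card.empty card.insert card_mono empty_iff finite.intros(1) finite_insert le_zero_eq One_nat_def)
    then show False using t3 by simp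
  qed
  then obtain w where w: "w \<in> t" "w \<noteq> y" by auto
  have "\<exists>w\<in>t'. w \<noteq> y"
  proof (rule ccontr)
    assume "\<not> ?thesis" then have "t' \<subseteq> {y}" by auto
    then have "card t' \<le> 1" by (metis card.empty card.insert card_mono empty_iff finite.intros(1) finite_insert le_zero_eq One_nat_def)
    then show False using t3' by simp
  qed
  then obtain w' where w': "w' \<in> t'" "w' \<noteq> y" by auto
  have e1: "{y,w} \<in> Edg X s" using Tri_edge[OF t(1) t(2) w(1)] w(2) by auto
  have e2: "{y,w'} \<in> Edg X s" using Tri_edge[OF t'(1) t'(2) w'(1)] w'(2) by auto
  have l1: "w \<in> lkv X {s,y}" using lkv2_iff[OF ys] e1 w(2) by auto
  have l2: "w' \<in> lkv X {s,y}" using lkv2_iff[OF ys] e2 w'(2) by auto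
  have sy: "{s,y} \<in> X" using sub[OF t3(3)] t(2) by auto
  have "card {s,y} = 2" using ys by auto
  then have "(w,w') \<in> (lrel X {s,y})\<^sup>*" using link_conn[OF sy _ l1 l2] by auto
  moreover have "lrel X {s,y} \<subseteq> lrel X {s,y} \<inter> {(a,b). {y,b} \<in> Edg X s}"
  proof
    fix p assume p: "p \<in> lrel X {s,y}"
    obtain a b where ab: "p = (a,b)" by (cases p)
    have "b \<in> lkv X {s,y}" using lrel_tgt(1) p ab by auto
    then show "p \<in> lrel X {s,y} \<inter> {(a,b). {y,b} \<in> Edg X s}" using lkv2_iff[OF ys] p ab by auto
  qed
  ultimately have "(w,w') \<in> (lrel X {s,y} \<inter> {(a,b). {y,b} \<in> Edg X s})\<^sup>*"
    using rtrancl_mono by blast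
  from around[OF this e1 _ ys t(1)] show ?thesis using t' w w' t(2) by auto
qed

lemma strong_conn:
  assumes t: "t \<in> Tri X s" and t': "t' \<in> Tri X s"
  shows "(t,t') \<in> (D (Tri X s) (Edg X s))\<^sup>*"
proof -
  have t3: "card t = 3" "s \<notin> t" "insert s t \<in> X" using t unfolding Tri_def by auto
  have t3': "card t' = 3" "s \<notin> t'" "insert s t' \<in> X" using t' unfolding Tri_def by auto
  obtain y where y: "y \<in> t" using t3(1) by fastforce
  obtain y' where y': "y' \<in> t'" using t3'(1) by fastforce
  have sX: "{s} \<in> X" using sub[OF t3(3)] by auto
  have ly: "y \<in> lkv X {s}" using y t3 sub[OF t3(3), of "{y,s}"] unfolding lkv_def by auto
  have ly': "y' \<in> lkv X {s}" using y' t3' sub[OF t3'(3), of "{y',s}"] unfolding lkv_def by auto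
  have "(y,y') \<in> (lrel X {s})\<^sup>*" using link_conn[OF sX _ ly ly'] by auto
  then have "\<forall>T\<in>Tri X s. y' \<in> T \<longrightarrow> (t,T) \<in> (D (Tri X s) (Edg X s))\<^sup>*"
  proof (induction rule: rtrancl_induct)
    case base then show ?case using vertex_share[OF t y] by auto
  next
    case (step z z')
    have h: "z \<noteq> z'" "z \<noteq> s" "z' \<noteq> s" "insert z (insert z' {s}) \<in> X"
      using step.hyps(2) unfolding lrel_def by auto
    have "{z,z'} \<in> Edg X s" using h unfolding Edg_def by (auto simp: insert_commute)
    then have "card {T\<in>Tri X s. {z,z'} \<subseteq> T} = 2" using Edg_tris(2) by blast
    then obtain T0 where T0: "T0 \<in> Tri X s" "{z,z'} \<subseteq> T0" by (metis (no_types, lifting) card.empty empty_Collect_eq zero_neq_numeral)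
    have "(t,T0) \<in> (D (Tri X s) (Edg X s))\<^sup>*" using step.IH T0 by auto
    then show ?case using vertex_share[OF T0(1)] T0(2) by (meson insert_subset rtrancl_trans)
  qed
  then show ?thesis using t' y' by auto
qed

end


context pm3 begin

lemma reroute:
  assumes e0: "x \<in> lkv X {s}" "y \<in> lkv X {s}" "insert x (insert y {s}) \<in> X" "x \<noteq> y"
    and Fy: "\<forall>e\<in>F. y \<notin> e"
    and tt: "t \<in> Tri X s" "t' \<in> Tri X s" "t \<noteq> t'" "t \<inter> t' = {x,y}"
  shows "(t,t') \<in> (D (Tri X s) (Edg X s - insert {x,y} F))\<^sup>*"
proof -
  let ?F' = "insert {x,y} F"
  let ?S = "Edg X s - ?F'"
  have ys: "y \<noteq> s" "x \<noteq> s" using e0 unfolding lkv_def by auto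
  have t3: "card t = 3" "s \<notin> t" "insert s t \<in> X" using tt(1) unfolding Tri_def by auto
  have t3': "card t' = 3" "s \<notin> t'" "insert s t' \<in> X" using tt(2) unfolding Tri_def by auto
  have xy_t: "{x,y} \<subseteq> t" "{x,y} \<subseteq> t'" using tt(4) by blast+
  have ft: "finite t" "finite t'" using t3(1) t3'(1) card.infinite by fastforce+
  have "card (t - {x,y}) = 1" using t3(1) xy_t(1) e0(4) card_Diff_subset[of "{x,y}" t] ft by auto
  then obtain z1 where z1: "t - {x,y} = {z1}" using card_1_singletonE by blast
  have "card (t' - {x,y}) = 1" using t3'(1) xy_t(2) e0(4) card_Diff_subset[of "{x,y}" t'] ft by auto
  then obtain z2 where z2: "t' - {x,y} = {z2}" using card_1_singletonE by blast
  have tz1: "t = {x,y,z1}" using z1 xy_t(1) by auto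
  have tz2: "t' = {x,y,z2}" using z2 xy_t(2) by auto
  have z1n: "z1 \<noteq> x" "z1 \<noteq> y" "z1 \<noteq> s" using z1 t3(2) tz1 by auto
  have z2n: "z2 \<noteq> x" "z2 \<noteq> y" "z2 \<noteq> s" using z2 t3'(2) tz2 by auto
  have z12: "z1 \<noteq> z2" using tz1 tz2 tt(3) by auto
  have xz1: "(x,z1) \<in> lrel X {s,y}"
    using z1n e0 ys t3(3) tz1 unfolding lrel_def by (auto simp: insert_commute)
  have xz2: "(x,z2) \<in> lrel X {s,y}"
    using z2n e0 ys t3'(3) tz2 unfolding lrel_def by (auto simp: insert_commute)
  have notF: "{y,w} \<notin> ?F'" if "w \<noteq> x" "w \<noteq> y" for w
  proof
    assume "{y,w} \<in> ?F'"
    then show False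
    proof
      assume "{y,w} = {x,y}" then show False using that by (metis doubleton_eq_iff)
    next
      assume "{y,w} \<in> F" then show False using Fy by auto
    qed
  qed
  have inS: "{y,w} \<in> ?S" if "w \<in> lkv X {s,y}" "w \<noteq> x" for w
  proof -
    have "w \<noteq> y \<and> {y,w} \<in> Edg X s" using lkv2_iff[OF ys(1)] that(1) by auto
    then show ?thesis using notF that(2) by auto
  qed
  define Rx where "Rx = {(a,b). (a,b) \<in> lrel X {s,y} \<and> b \<noteq> x}"
  define K where "K = {w. (z1,w) \<in> Rx\<^sup>*}"
  have Rx_sub: "Rx \<subseteq> lrel X {s,y} \<inter> {(a,b). {y,b} \<in> ?S}"
  proof
    fix p assume p: "p \<in> Rx"
    obtain a b where ab: "p = (a,b)" by (cases p)
    have "(a,b) \<in> lrel X {s,y}" "b \<noteq> x" using p ab unfolding Rx_def by auto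
    then show "p \<in> lrel X {s,y} \<inter> {(a,b). {y,b} \<in> ?S}" using inS lrel_tgt(1) ab by auto
  qed
  have z1l: "z1 \<in> lkv X {s,y}" using lrel_tgt(1)[OF xz1] .
  have xl: "x \<in> lkv X {s,y}" using lrel_tgt(2)[OF xz1] .
  have z2K: "z2 \<in> K"
  proof (rule ccontr)
    assume z2K: "z2 \<notin> K"
    have Kl: "K \<subseteq> lkv X {s,y}"
    proof
      fix w assume "w \<in> K"
      then have "(z1,w) \<in> Rx\<^sup>*" unfolding K_def by auto
      then show "w \<in> lkv X {s,y}"
      proof (induction rule: rtrancl_induct)
        case base then show ?case using z1l .
      next
        case (step a b) then show ?case using lrel_tgt(1) unfolding Rx_def by auto
      qed
    qed
    have xK: "x \<notin> K"
    proof
      assume "x \<in> K"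
      then have "(z1,x) \<in> Rx\<^sup>*" unfolding K_def by auto
      then show False
      proof (cases rule: rtranclE)
        case base then show False using z1n by auto
      next
        case (step b) then show False unfolding Rx_def by auto
      qed
    qed
    have nbx: "{w'. (x,w') \<in> lrel X {s,y}} = {z1,z2}"
    proof -
      have c: "card {w'. (x,w') \<in> lrel X {s,y}} = 2" using lrel_deg[OF xl ys(1)] .
      have sub2: "{z1,z2} \<subseteq> {w'. (x,w') \<in> lrel X {s,y}}" using xz1 xz2 by auto
      have fin: "finite {w'. (x,w') \<in> lrel X {s,y}}" using c card.infinite by fastforce
      show ?thesis using card_seteq[OF fin sub2] c z12 by auto
    qed
    have one: "{k\<in>K. (k,x) \<in> lrel X {s,y}} = {z1}"
    proof
      show "{k\<in>K. (k,x) \<in> lrel X {s,y}} \<subseteq> {z1}"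
      proof
        fix k assume k: "k \<in> {k\<in>K. (k,x) \<in> lrel X {s,y}}"
        then have "(x,k) \<in> lrel X {s,y}" using lrel_sym by auto
        then have "k \<in> {z1,z2}" using nbx by auto
        then show "k \<in> {z1}" using k z2K by auto
      qed
      show "{z1} \<subseteq> {k\<in>K. (k,x) \<in> lrel X {s,y}}" using lrel_sym[OF xz1] unfolding K_def by auto
    qed
    show False
    proof (rule parity_contra[where adj = "\<lambda>a b. (a,b) \<in> lrel X {s,y}" and K = K and x = x])
      show "finite K" using finite_subset[OF Kl lkv_fin] .
      show "x \<notin> K" using xK .
      show "\<And>a b. (a,b) \<in> lrel X {s,y} \<Longrightarrow> (b,a) \<in> lrel X {s,y}" using lrel_sym .
      show "\<And>a. (a,a) \<notin> lrel X {s,y}" unfolding lrel_def by auto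
      show "\<And>k. k \<in> K \<Longrightarrow> card {w. (k,w) \<in> lrel X {s,y}} = 2" using lrel_deg Kl ys(1) by auto
      show "\<And>k w. k \<in> K \<Longrightarrow> (k,w) \<in> lrel X {s,y} \<Longrightarrow> w \<in> K \<or> w = x"
      proof -
        fix k w assume "k \<in> K" "(k,w) \<in> lrel X {s,y}"
        then show "w \<in> K \<or> w = x" unfolding K_def Rx_def
          by (cases "w = x") (auto intro: rtrancl_into_rtrancl)
      qed
      show "card {k\<in>K. (k,x) \<in> lrel X {s,y}} = 1" using one by simp
    qed
  qed
  then have "(z1,z2) \<in> Rx\<^sup>*" unfolding K_def by auto
  then have path: "(z1,z2) \<in> (lrel X {s,y} \<inter> {(a,b). {y,b} \<in> ?S})\<^sup>*" using rtrancl_mono[OF Rx_sub] by blast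
  have w1: "{y,z1} \<in> ?S" using inS z1l z1n by auto
  have SE: "?S \<subseteq> Edg X s" by auto
  have "{y,z1} \<subseteq> t" "{y,z2} \<subseteq> t'" using tz1 tz2 by auto
  then show ?thesis using around[OF path w1 SE ys(1) tt(1)] tt(2) by auto
qed

end


context pm3 begin

lemma greedy:
  assumes "1 \<le> k" "k \<le> card (lkv X {s})" "{s} \<in> X"
  shows "\<exists>U F. U \<subseteq> lkv X {s} \<and> card U = k \<and> F \<subseteq> Edg X s \<and> (\<forall>e\<in>F. e \<subseteq> U) \<and> card F + 1 = k
     \<and> (\<forall>t\<in>Tri X s. \<forall>t'\<in>Tri X s. (t,t') \<in> (D (Tri X s) (Edg X s - F))\<^sup>*)"
  using assms(1,2)
proof (induction k)
  case 0 then show ?case by simp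
next
  case (Suc k)
  have finN: "finite (lkv X {s})" using lkv_fin .
  show ?case
  proof (cases "k = 0")
    case True
    have "lkv X {s} \<noteq> {}" using Suc.prems by auto
    then obtain x0 where "x0 \<in> lkv X {s}" by auto
    then show ?thesis using True strong_conn
      by (intro exI[of _ "{x0}"] exI[of _ "{}"]) auto
  next
    case False
    then obtain U F where UF: "U \<subseteq> lkv X {s}" "card U = k" "F \<subseteq> Edg X s" "\<forall>e\<in>F. e \<subseteq> U"
      "card F + 1 = k" "\<forall>t\<in>Tri X s. \<forall>t'\<in>Tri X s. (t,t') \<in> (D (Tri X s) (Edg X s - F))\<^sup>*"
      using Suc by auto
    have "U \<noteq> lkv X {s}" using UF(2) Suc.prems by auto
    then obtain b where b: "b \<in> lkv X {s}" "b \<notin> U" using UF(1) by auto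
    have "U \<noteq> {}" using UF(2) False by auto
    then obtain a where a: "a \<in> U" by auto
    have "(a,b) \<in> (lrel X {s})\<^sup>*" using link_conn[OF assms(3) _ _ b(1)] a UF(1) by auto
    then have "\<exists>x y. (x,y) \<in> lrel X {s} \<and> x \<in> U \<and> y \<notin> U" by (rule crossing) (use a b in auto)
    then obtain x y where xy: "(x,y) \<in> lrel X {s}" "x \<in> U" "y \<notin> U" by blast
    have xyl: "x \<in> lkv X {s}" "y \<in> lkv X {s}" using lrel_tgt[OF xy(1)] by auto
    have xyX: "insert x (insert y {s}) \<in> X" "x \<noteq> y" using xy(1) unfolding lrel_def by auto
    have Fy: "\<forall>e\<in>F. y \<notin> e" using UF(4) xy(3) by auto
    let ?F' = "insert {x,y} F"
    let ?U' = "insert y U"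
    have e0: "{x,y} \<in> Edg X s" using xyX xyl unfolding Edg_def lkv_def by (auto simp: insert_commute)
    have notin: "{x,y} \<notin> F" using Fy by auto
    have finF: "finite F" using finite_subset[OF UF(3) Edg_fin] .
    have finU: "finite U" using finite_subset[OF UF(1) finN] .
    have conn: "\<forall>t\<in>Tri X s. \<forall>t'\<in>Tri X s. (t,t') \<in> (D (Tri X s) (Edg X s - ?F'))\<^sup>*"
    proof (intro ballI)
      fix t t' assume "t \<in> Tri X s" "t' \<in> Tri X s"
      then have tt: "(t,t') \<in> (D (Tri X s) (Edg X s - F))\<^sup>*" using UF(6) by auto
      have "D (Tri X s) (Edg X s - F) \<subseteq> (D (Tri X s) (Edg X s - ?F'))\<^sup>*"
      proof
        fix p assume p: "p \<in> D (Tri X s) (Edg X s - F)"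
        obtain t1 t2 where p12: "p = (t1,t2)" by (cases p)
        have h: "t1 \<in> Tri X s" "t2 \<in> Tri X s" "t1 \<noteq> t2" "t1 \<inter> t2 \<in> Edg X s - F"
          using p p12 unfolding D_def by auto
        show "p \<in> (D (Tri X s) (Edg X s - ?F'))\<^sup>*"
        proof (cases "t1 \<inter> t2 = {x,y}")
          case True
          then show ?thesis using reroute[OF xyl xyX Fy h(1,2,3)] p12 by auto
        next
          case False
          then have "p \<in> D (Tri X s) (Edg X s - ?F')" using h p12 unfolding D_def by auto
          then show ?thesis by auto
        qed
      qed
      then show "(t,t') \<in> (D (Tri X s) (Edg X s - ?F'))\<^sup>*" using rtrancl_subset_rtrancl tt by blast
    qed
    show ?thesis
    proof (intro exI[of _ ?U'] exI[of _ ?F'] conjI)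
      show "?U' \<subseteq> lkv X {s}" using UF(1) xyl by auto
      show "card ?U' = Suc k" using UF(2) xy(3) finU by auto
      show "?F' \<subseteq> Edg X s" using UF(3) e0 by auto
      show "\<forall>e\<in>?F'. e \<subseteq> ?U'" using UF(4) xy(2) by auto
      show "card ?F' + 1 = Suc k" using UF(5) notin finF by auto
      show "\<forall>t\<in>Tri X s. \<forall>t'\<in>Tri X s. (t,t') \<in> (D (Tri X s) (Edg X s - ?F'))\<^sup>*" using conn .
    qed
  qed
qed

lemma double_count: "card (Edg X s) * 2 = card (Tri X s) * 3"
proof -
  let ?P = "{(e,t). e \<in> Edg X s \<and> t \<in> Tri X s \<and> e \<subseteq> t}"
  have "?P = (SIGMA e:Edg X s. {t\<in>Tri X s. e \<subseteq> t})" by auto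
  then have "card ?P = (\<Sum>e\<in>Edg X s. card {t\<in>Tri X s. e \<subseteq> t})" using Edg_fin Tri_fin by (simp add: card_SigmaI)
  also have "\<dots> = (\<Sum>e\<in>Edg X s. 2)" using Edg_tris(2) by (intro sum.cong) auto
  finally have c1: "card ?P = card (Edg X s) * 2" by simp
  let ?Q = "{(t,e). t \<in> Tri X s \<and> e \<in> Edg X s \<and> e \<subseteq> t}"
  have "?Q = (SIGMA t:Tri X s. {e\<in>Edg X s. e \<subseteq> t})" by auto
  then have "card ?Q = (\<Sum>t\<in>Tri X s. card {e\<in>Edg X s. e \<subseteq> t})" using Edg_fin Tri_fin by (simp add: card_SigmaI)
  also have "\<dots> = (\<Sum>t\<in>Tri X s. 3)"
  proof (intro sum.cong refl)
    fix t assume t: "t \<in> Tri X s"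
    have "{e\<in>Edg X s. e \<subseteq> t} = {e. e \<subseteq> t \<and> card e = 2}"
    proof
      show "{e\<in>Edg X s. e \<subseteq> t} \<subseteq> {e. e \<subseteq> t \<and> card e = 2}" unfolding Edg_def by auto
      show "{e. e \<subseteq> t \<and> card e = 2} \<subseteq> {e\<in>Edg X s. e \<subseteq> t}"
      proof
        fix e assume e: "e \<in> {e. e \<subseteq> t \<and> card e = 2}"
        have "insert s e \<subseteq> insert s t" using e by auto
        then have "insert s e \<in> X" using sub t unfolding Tri_def by blast
        then show "e \<in> {e\<in>Edg X s. e \<subseteq> t}" using e t unfolding Edg_def Tri_def by auto
      qed
    qed
    then show "card {e\<in>Edg X s. e \<subseteq> t} = 3" using two_subsets t unfolding Tri_def by auto
  qed
  finally have c2: "card ?Q = card (Tri X s) * 3" by simp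
  have "?Q = (\<lambda>(e,t). (t,e)) ` ?P" by auto
  moreover have "inj_on (\<lambda>(e,t). (t,e)) ?P" unfolding inj_on_def by auto
  ultimately have "card ?Q = card ?P" by (simp add: card_image)
  then show ?thesis using c1 c2 by simp
qed

lemma link_bound: assumes "{s} \<in> X" shows "3 * card (lkv X {s}) \<le> card (Edg X s) + 6"
proof -
  obtain \<sigma> where \<sigma>: "\<sigma> \<in> X" "card \<sigma> = 4" "{s} \<subseteq> \<sigma>" using in_facet[OF assms] by auto
  have fs: "finite \<sigma>" using finF \<sigma>(1) .
  have tri: "\<sigma> - {s} \<in> Tri X s" using \<sigma> fs unfolding Tri_def by (auto simp: insert_absorb)
  have "card (\<sigma> - {s}) = 3" using tri unfolding Tri_def by auto
  then have "\<sigma> - {s} \<noteq> {}" by (metis card.empty zero_neq_numeral)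
  then obtain y where y: "y \<in> \<sigma> - {s}" by blast
  have "insert y {s} \<subseteq> \<sigma>" using y \<sigma>(3) by auto
  then have "y \<in> lkv X {s}" using y sub[OF \<sigma>(1)] unfolding lkv_def by auto
  then have ne: "1 \<le> card (lkv X {s})" using lkv_fin by (metis One_nat_def Suc_leI card_gt_0_iff empty_iff)
  obtain U F where UF: "F \<subseteq> Edg X s" "card F + 1 = card (lkv X {s})"
    "\<forall>t\<in>Tri X s. \<forall>t'\<in>Tri X s. (t,t') \<in> (D (Tri X s) (Edg X s - F))\<^sup>*"
    using greedy[OF ne order_refl assms] by blast
  have "card (Tri X s) \<le> card (Edg X s - F) + 1"
  proof (rule dual_count)
    show "finite (Tri X s)" using Tri_fin .
    show "Tri X s \<noteq> {}" using tri by auto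
    show "finite (Edg X s - F)" using Edg_fin by auto
    show "\<forall>t\<in>Tri X s. \<forall>t'\<in>Tri X s. (t,t') \<in> (D (Tri X s) (Edg X s - F))\<^sup>*" using UF(3) .
    show "\<forall>e\<in>Edg X s - F. card {t\<in>Tri X s. e \<subseteq> t} \<le> 2" using Edg_tris(2) by auto
  qed
  moreover have "card (Edg X s - F) = card (Edg X s) - card F"
    using card_Diff_subset[OF finite_subset[OF UF(1) Edg_fin] UF(1)] .
  moreover have "card F \<le> card (Edg X s)" using card_mono[OF Edg_fin UF(1)] .
  moreover note double_count[of s]
  ultimately show ?thesis using UF(2) by linarith
qed

end


definition ecount :: "'a set set \<Rightarrow> 'a set \<Rightarrow> nat" where
  "ecount X S = card {e \<in> edges X. e \<subseteq> S}"

definition tight :: "'a set set \<Rightarrow> 'a set \<Rightarrow> bool" where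
  "tight X B \<longleftrightarrow> B \<subseteq> vertices X \<and> (\<exists>\<sigma>\<in>X. card \<sigma> = 4 \<and> \<sigma> \<subseteq> B) \<and> ecount X B + 10 = 4 * card B"

locale pm3r = pm3 +
  assumes mr: "minimally_rigid 4 3 X"
begin

lemma rig: "rigid 4 3 X" using mr unfolding minimally_rigid_def by auto

lemma edges_sub: "e \<in> edges X \<Longrightarrow> e \<subseteq> vertices X"
  unfolding edges_def vertices_def by auto

lemma fin_edges: "finite (edges X)" unfolding edges_def using finX by auto

lemma ecount_total: "card (edges X) + 10 = 4 * card (vertices X)"
proof -
  have "int (card (edges X)) = (int (card (vertices X)) - 3 - 1) * 4 + int ((3 + 1) choose 2)"
    using mr unfolding minimally_rigid_def by simp
  moreover have "((3 + 1::nat) choose 2) = 6" by (simp add: numeral_eq_Suc)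
  ultimately have "int (card (edges X)) = int (card (vertices X)) * 4 - 10" by simp
  then show ?thesis by linarith
qed

lemma ecount_V: "ecount X (vertices X) = card (edges X)"
  unfolding ecount_def using edges_sub by (metis (no_types, lifting) Collect_cong Collect_mem_eq)

lemma sparse:
  assumes B: "B \<subseteq> vertices X" and \<sigma>: "\<sigma> \<in> X" "card \<sigma> = 4" "\<sigma> \<subseteq> B"
  shows "ecount X B + 10 \<le> 4 * card B"
proof -
  let ?A = "vertices X - B"
  have "?A \<subseteq> vertices X" by auto
  moreover have "\<exists>\<sigma>\<in>X. card \<sigma> = 4 \<and> ?A \<inter> \<sigma> = {}" using \<sigma> by auto
  moreover have H: "\<forall>A. A \<subseteq> vertices X \<longrightarrow> (\<exists>\<sigma>\<in>X. card \<sigma> = 3 + 1 \<and> A \<inter> \<sigma> = {}) \<longrightarrow>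
        4 * card A \<le> card {e \<in> edges X. e \<inter> A \<noteq> {}}" using rig unfolding rigid_def by auto
  ultimately have r: "4 * card ?A \<le> card {e \<in> edges X. e \<inter> ?A \<noteq> {}}"
    by simp
  have split: "edges X = {e \<in> edges X. e \<inter> ?A \<noteq> {}} \<union> {e \<in> edges X. e \<subseteq> B}"
    using edges_sub by blast
  have disj: "{e \<in> edges X. e \<inter> ?A \<noteq> {}} \<inter> {e \<in> edges X. e \<subseteq> B} = {}" by blast
  have "card (edges X) = card {e \<in> edges X. e \<inter> ?A \<noteq> {}} + ecount X B"
    unfolding ecount_def by (subst split) (rule card_Un_disjoint, use fin_edges disj in auto)
  moreover have "card ?A = card (vertices X) - card B" using card_Diff_subset[OF finite_subset[OF B finV] B] .
  moreover have "card B \<le> card (vertices X)" using card_mono[OF finV B] .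
  ultimately show ?thesis using r ecount_total by linarith
qed

lemma tight_V: "tight X (vertices X)"
proof -
  obtain \<sigma> where "\<sigma> \<in> X" "card \<sigma> = 4" using in_facet empty_in by blast
  moreover then have "\<sigma> \<subseteq> vertices X" unfolding vertices_def by auto
  ultimately show ?thesis unfolding tight_def using ecount_V ecount_total by auto
qed

lemma tight_union:
  assumes S: "tight X S" and T: "tight X T" and \<sigma>: "\<sigma> \<in> X" "card \<sigma> = 4" "\<sigma> \<subseteq> S \<inter> T"
  shows "tight X (S \<union> T)"
proof -
  have SV: "S \<subseteq> vertices X" "T \<subseteq> vertices X" using S T unfolding tight_def by auto
  have fS: "finite S" "finite T" using SV finite_subset finV by auto
  let ?E = "\<lambda>B. {e \<in> edges X. e \<subseteq> B}"
  have fE: "finite (?E B)" for B using fin_edges by auto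
  have "card (?E S \<union> ?E T) + card (?E S \<inter> ?E T) = card (?E S) + card (?E T)"
    using card_Un_Int[OF fE fE] by simp
  moreover have "?E S \<inter> ?E T = ?E (S \<inter> T)" by blast
  then have "card (?E S \<inter> ?E T) = card (?E (S \<inter> T))" by simp
  moreover have "card (?E S \<union> ?E T) \<le> card (?E (S \<union> T))" by (rule card_mono[OF fE]) blast
  moreover have "ecount X (S \<inter> T) + 10 \<le> 4 * card (S \<inter> T)"
    using sparse[of "S \<inter> T" \<sigma>] SV \<sigma> by auto
  moreover have "card (S \<union> T) + card (S \<inter> T) = card S + card T" using card_Un_Int[OF fS] by simp
  moreover have "ecount X (S \<union> T) + 10 \<le> 4 * card (S \<union> T)"
    using sparse[of "S \<union> T" \<sigma>] SV \<sigma> by auto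
  moreover have "ecount X S + 10 = 4 * card S" "ecount X T + 10 = 4 * card T"
    using S T unfolding tight_def by auto
  ultimately have "ecount X (S \<union> T) + 10 = 4 * card (S \<union> T)"
    unfolding ecount_def by linarith
  then show ?thesis unfolding tight_def using SV \<sigma> by blast
qed

lemma tight_facet: assumes "\<sigma> \<in> X" "card \<sigma> = 4" shows "tight X \<sigma>"
proof -
  have fs: "finite \<sigma>" using finF assms(1) .
  have "{e \<in> edges X. e \<subseteq> \<sigma>} = {e. e \<subseteq> \<sigma> \<and> card e = 2}"
    unfolding edges_def using sub assms(1) by auto
  then have "ecount X \<sigma> = 4 choose 2" unfolding ecount_def using n_subsets[OF fs, of 2] assms(2) by simp
  moreover have "(4::nat) choose 2 = 6" by (simp add: numeral_eq_Suc)
  ultimately show ?thesis unfolding tight_def using assms unfolding vertices_def by auto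
qed

lemma tight_nbhd: assumes s: "{s} \<in> X" shows "tight X (insert s (lkv X {s}))"
proof -
  let ?N = "insert s (lkv X {s})"
  have NV: "?N \<subseteq> vertices X" using s unfolding lkv_def vertices_def by auto
  obtain \<sigma> where \<sigma>: "\<sigma> \<in> X" "card \<sigma> = 4" "{s} \<subseteq> \<sigma>" using in_facet[OF s] by auto
  have \<sigma>N: "\<sigma> \<subseteq> ?N"
  proof
    fix y assume "y \<in> \<sigma>"
    then have "insert y {s} \<subseteq> \<sigma>" using \<sigma>(3) by auto
    then show "y \<in> ?N" using sub[OF \<sigma>(1)] unfolding lkv_def by auto
  qed
  let ?A = "(\<lambda>y. {s,y}) ` lkv X {s}"
  have A: "?A \<subseteq> {e \<in> edges X. e \<subseteq> ?N}"
    unfolding edges_def lkv_def by (auto simp: insert_commute)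
  have B: "Edg X s \<subseteq> {e \<in> edges X. e \<subseteq> ?N}"
  proof
    fix e assume e: "e \<in> Edg X s"
    then have h: "card e = 2" "s \<notin> e" "insert s e \<in> X" unfolding Edg_def by auto
    have "e \<in> X" using sub[OF h(3)] by auto
    moreover have "e \<subseteq> ?N"
    proof
      fix y assume "y \<in> e"
      then have "insert y {s} \<subseteq> insert s e" by auto
      then show "y \<in> ?N" using sub[OF h(3)] h(2) \<open>y \<in> e\<close> unfolding lkv_def by auto
    qed
    ultimately show "e \<in> {e \<in> edges X. e \<subseteq> ?N}" using h unfolding edges_def by auto
  qed
  have disj: "?A \<inter> Edg X s = {}" unfolding Edg_def by auto
  have injA: "inj_on (\<lambda>y. {s,y}) (lkv X {s})" unfolding inj_on_def lkv_def by (auto simp: doubleton_eq_iff)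
  have "card ?A + card (Edg X s) = card (?A \<union> Edg X s)"
    using card_Un_disjoint[OF finite_imageI[OF lkv_fin] Edg_fin disj] by simp
  also have "\<dots> \<le> ecount X ?N" unfolding ecount_def
    by (rule card_mono) (use fin_edges A B in auto)
  finally have "card (lkv X {s}) + card (Edg X s) \<le> ecount X ?N" using card_image[OF injA] by simp
  moreover have "3 * card (lkv X {s}) \<le> card (Edg X s) + 6" using link_bound[OF s] .
  moreover have "s \<notin> lkv X {s}" unfolding lkv_def by auto
  then have "card ?N = Suc (card (lkv X {s}))" using lkv_fin by simp
  moreover have "ecount X ?N + 10 \<le> 4 * card ?N" using sparse[OF NV \<sigma>(1,2) \<sigma>N] .
  ultimately have "ecount X ?N + 10 = 4 * card ?N" by linarith
  then show ?thesis unfolding tight_def using NV \<sigma> \<sigma>N by blast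
qed

end


context pm3r begin

lemma lkv_empty: "lkv X {} = vertices X"
  unfolding lkv_def using vertices_iff by auto

lemma nbr_edges: "{e \<in> edges X. c \<in> e} = (\<lambda>y. {c,y}) ` lkv X {c}"
proof
  show "{e \<in> edges X. c \<in> e} \<subseteq> (\<lambda>y. {c,y}) ` lkv X {c}"
  proof
    fix e assume e: "e \<in> {e \<in> edges X. c \<in> e}"
    then have "card e = 2" "e \<in> X" "c \<in> e" unfolding edges_def by auto
    then obtain y where y: "e = {c,y}" "y \<noteq> c"
      by (metis card_2_iff doubleton_eq_iff insert_iff singletonD)
    then have "y \<in> lkv X {c}" using \<open>e \<in> X\<close> unfolding lkv_def by (auto simp: insert_commute)
    then show "e \<in> (\<lambda>y. {c,y}) ` lkv X {c}" using y by auto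
  qed
  show "(\<lambda>y. {c,y}) ` lkv X {c} \<subseteq> {e \<in> edges X. c \<in> e}"
    unfolding lkv_def edges_def by (auto simp: insert_commute)
qed

lemma card_nbr_edges: "card {e \<in> edges X. c \<in> e} = card (lkv X {c})"
proof -
  have "inj_on (\<lambda>y. {c,y}) (lkv X {c})" unfolding inj_on_def lkv_def by (auto simp: doubleton_eq_iff)
  then show ?thesis unfolding nbr_edges by (rule card_image)
qed

lemma deg4_exists: "\<exists>c. {c} \<in> X \<and> card (lkv X {c}) = 4"
proof -
  let ?V = "vertices X"
  obtain \<sigma>0 where \<sigma>0: "\<sigma>0 \<in> X" "card \<sigma>0 = 4" using in_facet empty_in by blast
  have \<sigma>0V: "\<sigma>0 \<subseteq> ?V" using \<sigma>0 unfolding vertices_def by auto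
  have \<sigma>0ne: "\<sigma>0 \<noteq> ?V"
  proof
    assume eq: "\<sigma>0 = ?V"
    have f0: "finite \<sigma>0" using finF \<sigma>0(1) .
    obtain x where x: "x \<in> \<sigma>0" using \<sigma>0(2) by (metis card.empty ex_in_conv zero_neq_numeral)
    let ?\<tau> = "\<sigma>0 - {x}"
    have t: "?\<tau> \<in> X" "card ?\<tau> = 3" using sub[OF \<sigma>0(1)] \<sigma>0(2) x f0 by auto
    have "{\<sigma>\<in>X. card \<sigma> = 4 \<and> ?\<tau> \<subseteq> \<sigma>} \<subseteq> {\<sigma>0}"
    proof
      fix \<sigma> assume s: "\<sigma> \<in> {\<sigma>\<in>X. card \<sigma> = 4 \<and> ?\<tau> \<subseteq> \<sigma>}"
      then have "\<sigma> \<subseteq> \<sigma>0" using eq unfolding vertices_def by auto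
      then show "\<sigma> \<in> {\<sigma>0}" using card_seteq[OF f0] s \<sigma>0(2) by auto
    qed
    then have "card {\<sigma>\<in>X. card \<sigma> = 4 \<and> ?\<tau> \<subseteq> \<sigma>} \<le> card {\<sigma>0}" by (rule card_mono[rotated]) simp
    then have "card {\<sigma>\<in>X. card \<sigma> = 4 \<and> ?\<tau> \<subseteq> \<sigma>} \<le> 1" by simp
    then show False using two[OF t] by simp
  qed
  let ?BB = "{B. tight X B \<and> B \<noteq> ?V}"
  have finBB: "finite ?BB" by (rule finite_subset[of _ "Pow ?V"]) (auto simp: tight_def finV)
  have "\<sigma>0 \<in> ?BB" using tight_facet[OF \<sigma>0] \<sigma>0ne by auto
  then obtain B where B: "B \<in> ?BB" "\<forall>b\<in>?BB. B \<subseteq> b \<longrightarrow> B = b"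
    using finite_has_maximal2[OF finBB] by blast
  have tB: "tight X B" "B \<noteq> ?V" using B(1) by auto
  have BV: "B \<subseteq> ?V" using tB unfolding tight_def by auto
  have finB: "finite B" using finite_subset[OF BV finV] .
  have maxB: "B' = ?V" if "tight X B'" "B \<subseteq> B'" "B' \<noteq> B" for B'
    using B(2) that by auto
  have "\<exists>s \<sigma>. \<sigma> \<in> X \<and> card \<sigma> = 4 \<and> \<sigma> \<subseteq> B \<and> s \<in> \<sigma> \<and> \<not> insert s (lkv X {s}) \<subseteq> B"
  proof (rule ccontr)
    assume H: "\<not> ?thesis"
    let ?Q = "{x. \<exists>\<sigma>\<in>X. card \<sigma> = 4 \<and> \<sigma> \<subseteq> B \<and> x \<in> \<sigma>}"
    obtain \<sigma>B where \<sigma>B: "\<sigma>B \<in> X" "card \<sigma>B = 4" "\<sigma>B \<subseteq> B" using tB unfolding tight_def by auto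
    obtain x0 where x0: "x0 \<in> \<sigma>B" using \<sigma>B(2) by (metis card.empty ex_in_conv zero_neq_numeral)
    have x0Q: "x0 \<in> ?Q" using \<sigma>B x0 by auto
    have "?V \<subseteq> ?Q"
    proof
      fix v assume v: "v \<in> ?V"
      have x0V: "x0 \<in> ?V" using x0 \<sigma>B(3) BV by auto
      have "(x0,v) \<in> (lrel X {})\<^sup>*" using link_conn[OF empty_in _ ] x0V v lkv_empty by auto
      then show "v \<in> ?Q"
      proof (rule closure_rt[where S = ?Q])
        show "x0 \<in> ?Q" using x0Q .
        fix x y assume xy: "(x,y) \<in> lrel X {}" "x \<in> ?Q"
        then have Nx: "insert x (lkv X {x}) \<subseteq> B" using H by blast
        have "{x,y} \<in> X" using xy(1) unfolding lrel_def by auto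
        then obtain \<rho> where \<rho>: "\<rho> \<in> X" "card \<rho> = 4" "{x,y} \<subseteq> \<rho>" using in_facet by blast
        have "\<rho> \<subseteq> insert x (lkv X {x})"
        proof
          fix z assume "z \<in> \<rho>"
          then have "insert z {x} \<subseteq> \<rho>" using \<rho>(3) by auto
          then show "z \<in> insert x (lkv X {x})" using sub[OF \<rho>(1)] unfolding lkv_def by auto
        qed
        then show "y \<in> ?Q" using \<rho> Nx by blast
      qed
    qed
    then have "?V \<subseteq> B" by blast
    then show False using tB BV by auto
  qed
  then obtain s \<sigma>s where s: "\<sigma>s \<in> X" "card \<sigma>s = 4" "\<sigma>s \<subseteq> B" "s \<in> \<sigma>s" "\<not> insert s (lkv X {s}) \<subseteq> B"
    by blast
  have sX: "{s} \<in> X" using sub[OF s(1)] s(4) by auto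
  let ?N = "insert s (lkv X {s})"
  have \<sigma>sN: "\<sigma>s \<subseteq> ?N"
  proof
    fix z assume "z \<in> \<sigma>s"
    then have "insert z {s} \<subseteq> \<sigma>s" using s(4) by auto
    then show "z \<in> ?N" using sub[OF s(1)] unfolding lkv_def by auto
  qed
  have "tight X (?N \<union> B)" using tight_union[OF tight_nbhd[OF sX] tB(1) s(1,2)] s(3) \<sigma>sN by auto
  then have NB: "?N \<union> B = ?V" using maxB[of "?N \<union> B"] s(5) by auto
  have outN: "w \<in> lkv X {s}" if "w \<in> ?V" "w \<notin> B" for w using NB that s(3,4) by auto
  let ?t0 = "\<sigma>s - {s}"
  have fs: "finite \<sigma>s" using finF s(1) .
  have t0: "?t0 \<in> Tri X s" using s fs unfolding Tri_def by (auto simp: insert_absorb)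
  obtain w where w: "w \<in> ?V" "w \<notin> B" using tB BV by auto
  have wl: "w \<in> lkv X {s}" using outN w by auto
  then have "{w,s} \<in> X" unfolding lkv_def by auto
  then obtain \<rho> where \<rho>: "\<rho> \<in> X" "card \<rho> = 4" "{w,s} \<subseteq> \<rho>" using in_facet by blast
  have f\<rho>: "finite \<rho>" using finF \<rho>(1) .
  have t1: "\<rho> - {s} \<in> Tri X s" using \<rho> f\<rho> unfolding Tri_def by (auto simp: insert_absorb)
  have "(?t0, \<rho> - {s}) \<in> (D (Tri X s) (Edg X s))\<^sup>*" using strong_conn[OF t0 t1] .
  moreover have "?t0 \<in> {t. t \<subseteq> B}" using s(3) by auto
  moreover have "\<rho> - {s} \<notin> {t. t \<subseteq> B}" using \<rho>(3) w(2) wl unfolding lkv_def by auto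
  ultimately have "\<exists>x y. (x,y) \<in> D (Tri X s) (Edg X s) \<and> x \<in> {t. t \<subseteq> B} \<and> y \<notin> {t. t \<subseteq> B}"
    by (rule crossing)
  then obtain ta tb where tab: "(ta,tb) \<in> D (Tri X s) (Edg X s)" "ta \<subseteq> B" "\<not> tb \<subseteq> B"
    by blast
  have tab2: "ta \<in> Tri X s" "tb \<in> Tri X s" "ta \<noteq> tb" "ta \<inter> tb \<in> Edg X s"
    using tab(1) unfolding D_def by auto
  have "card (ta \<inter> tb) = 2" using tab2(4) unfolding Edg_def by blast
  then obtain p q where pq: "ta \<inter> tb = {p,q}" "p \<noteq> q" by (meson card_2_iff)
  have ta3: "card ta = 3" "s \<notin> ta" "insert s ta \<in> X" using tab2(1) unfolding Tri_def by auto
  have tb3: "card tb = 3" "s \<notin> tb" "insert s tb \<in> X" using tab2(2) unfolding Tri_def by auto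
  have fta: "finite ta" "finite tb" using ta3(1) tb3(1) card.infinite by fastforce+
  have pqa: "{p,q} \<subseteq> ta" "{p,q} \<subseteq> tb" using pq(1) by blast+
  have "card (ta - {p,q}) = 1" using ta3(1) pqa(1) pq(2) card_Diff_subset[of "{p,q}" ta] fta by auto
  then obtain r where r: "ta - {p,q} = {r}" using card_1_singletonE by blast
  have "card (tb - {p,q}) = 1" using tb3(1) pqa(2) pq(2) card_Diff_subset[of "{p,q}" tb] fta by auto
  then obtain u where u: "tb - {p,q} = {u}" using card_1_singletonE by blast
  have tar: "ta = {p,q,r}" using r pqa(1) by auto
  have tbu: "tb = {p,q,u}" using u pqa(2) by auto
  have rn: "r \<noteq> p" "r \<noteq> q" "r \<noteq> s" using r ta3(2) tar by auto
  have un: "u \<noteq> p" "u \<noteq> q" "u \<noteq> s" using u tb3(2) tbu by auto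
  have ru: "r \<noteq> u" using tar tbu tab2(3) by auto
  have pqB: "p \<in> B" "q \<in> B" "r \<in> B" using tab(2) tar by auto
  have uB: "u \<notin> B" using tab(3) tbu pqB by auto
  have sB: "s \<in> B" using s(3,4) by auto
  have spq: "s \<noteq> p" "s \<noteq> q" using ta3(2) tar by auto
  let ?G = "lrel X {p,q}"
  have sr: "(s,r) \<in> ?G" using rn spq ta3(3) tar unfolding lrel_def by (auto simp: insert_commute)
  have su: "(s,u) \<in> ?G" using un spq tb3(3) tbu unfolding lrel_def by (auto simp: insert_commute)
  have sl: "s \<in> lkv X {p,q}" using lrel_tgt(2)[OF sr] .
  have ul: "u \<in> lkv X {p,q}" using lrel_tgt(1)[OF su] .
  have qp: "q \<noteq> p" using pq(2) by auto
  define Ru where "Ru = {(a,b). (a,b) \<in> ?G \<and> b \<notin> B}"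
  define K where "K = {x. (u,x) \<in> Ru\<^sup>*}"
  have Kprop: "x \<in> lkv X {p,q} \<and> x \<notin> B" if "x \<in> K" for x
  proof -
    have "(u,x) \<in> Ru\<^sup>*" using that unfolding K_def by auto
    then show ?thesis
    proof (induction rule: rtrancl_induct)
      case base then show ?case using ul uB by auto
    next
      case (step a b) then show ?case using lrel_tgt(1) unfolding Ru_def by auto
    qed
  qed
  have "\<exists>c\<in>K. \<exists>b. (c,b) \<in> ?G \<and> b \<in> B \<and> b \<noteq> s"
  proof (rule ccontr)
    assume H: "\<not> ?thesis"
    have nbs: "{w'. (s,w') \<in> ?G} = {r,u}"
    proof -
      have c: "card {w'. (s,w') \<in> ?G} = 2" using lrel_deg[OF sl qp] .
      have sub2: "{r,u} \<subseteq> {w'. (s,w') \<in> ?G}" using sr su by auto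
      have fin: "finite {w'. (s,w') \<in> ?G}" using c card.infinite by fastforce
      show ?thesis using card_seteq[OF fin sub2] c ru by auto
    qed
    show False
    proof (rule parity_contra[where adj = "\<lambda>a b. (a,b) \<in> ?G" and K = K and x = s])
      show "finite K" by (rule finite_subset[OF _ lkv_fin[of "{p,q}"]]) (use Kprop in auto)
      show "s \<notin> K" using Kprop sB by auto
      show "\<And>a b. (a,b) \<in> ?G \<Longrightarrow> (b,a) \<in> ?G" using lrel_sym .
      show "\<And>a. (a,a) \<notin> ?G" unfolding lrel_def by auto
      show "\<And>k. k \<in> K \<Longrightarrow> card {w. (k,w) \<in> ?G} = 2" using lrel_deg Kprop qp by auto
      show "\<And>k w. k \<in> K \<Longrightarrow> (k,w) \<in> ?G \<Longrightarrow> w \<in> K \<or> w = s"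
      proof -
        fix k w assume kw: "k \<in> K" "(k,w) \<in> ?G"
        show "w \<in> K \<or> w = s"
        proof (cases "w \<in> B")
          case True then show ?thesis using H kw by auto
        next
          case False
          then have "(k,w) \<in> Ru" using kw(2) unfolding Ru_def by auto
          then show ?thesis using kw(1) unfolding K_def by (auto intro: rtrancl_into_rtrancl)
        qed
      qed
      have "{k\<in>K. (k,s) \<in> ?G} = {u}"
      proof
        show "{k\<in>K. (k,s) \<in> ?G} \<subseteq> {u}"
        proof
          fix k assume k: "k \<in> {k\<in>K. (k,s) \<in> ?G}"
          then have "(s,k) \<in> ?G" using lrel_sym by auto
          then have "k \<in> {r,u}" using nbs by auto
          then show "k \<in> {u}" using k Kprop pqB by auto
        qed
        show "{u} \<subseteq> {k\<in>K. (k,s) \<in> ?G}" using lrel_sym[OF su] unfolding K_def by auto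
      qed
      then show "card {k\<in>K. (k,s) \<in> ?G} = 1" by simp
    qed
  qed
  then obtain c b where cb: "c \<in> K" "(c,b) \<in> ?G" "b \<in> B" "b \<noteq> s" by blast
  have cl: "c \<in> lkv X {p,q}" "c \<notin> B" using Kprop cb(1) by auto
  have cbX: "insert c (insert b {p,q}) \<in> X" "c \<noteq> b" "b \<noteq> p" "b \<noteq> q" "c \<noteq> p" "c \<noteq> q"
    using cb(2) unfolding lrel_def by auto
  have cV: "c \<in> ?V" using cbX(1) unfolding vertices_def by auto
  have cs: "c \<in> lkv X {s}" using outN cV cl(2) by auto
  let ?B' = "insert c B"
  let ?new = "{{c,p},{c,q},{c,b},{c,s}}"
  have new_edges: "?new \<subseteq> {e \<in> edges X. e \<subseteq> ?B'}"
  proof -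
    have "{c,p} \<in> X" "{c,q} \<in> X" "{c,b} \<in> X" using sub[OF cbX(1)] by auto
    moreover have "{c,s} \<in> X" using cs unfolding lkv_def by (auto simp: insert_commute)
    moreover have "c \<noteq> s" using cl(2) sB by auto
    ultimately show ?thesis unfolding edges_def using cbX pqB cb(3) sB by auto
  qed
  have cnew: "card ?new = 4"
  proof -
    have "c \<noteq> s" using cl(2) sB by auto
    then show ?thesis using cbX(3,4) cb(4) spq pq(2) by (auto simp: doubleton_eq_iff)
  qed
  have disjn: "?new \<inter> {e \<in> edges X. e \<subseteq> B} = {}" using cl(2) by auto
  have "{e \<in> edges X. e \<subseteq> B} \<union> ?new \<subseteq> {e \<in> edges X. e \<subseteq> ?B'}" using new_edges by auto
  then have "card ({e \<in> edges X. e \<subseteq> B} \<union> ?new) \<le> ecount X ?B'"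
    unfolding ecount_def by (rule card_mono[rotated]) (use fin_edges in auto)
  moreover have "card ({e \<in> edges X. e \<subseteq> B} \<union> ?new) = ecount X B + 4"
    unfolding ecount_def using card_Un_disjoint[of "{e \<in> edges X. e \<subseteq> B}" ?new] fin_edges disjn cnew by auto
  moreover have "ecount X B + 10 = 4 * card B" using tB unfolding tight_def by auto
  moreover have cB': "card ?B' = Suc (card B)" using cl(2) finB by simp
  ultimately have ge: "4 * card ?B' \<le> ecount X ?B' + 10" by linarith
  have B'V: "?B' \<subseteq> ?V" using BV cV by auto
  have "ecount X ?B' + 10 \<le> 4 * card ?B'" using sparse[OF B'V s(1,2)] s(3) by auto
  then have "tight X ?B'" unfolding tight_def using ge B'V s(1,2,3) by auto
  then have B'eq: "?B' = ?V" using maxB[of ?B'] cl(2) by auto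
  have split: "edges X = {e \<in> edges X. e \<subseteq> B} \<union> {e \<in> edges X. c \<in> e}"
  proof
    show "edges X \<subseteq> {e \<in> edges X. e \<subseteq> B} \<union> {e \<in> edges X. c \<in> e}"
    proof
      fix e assume e: "e \<in> edges X"
      then have "e \<subseteq> insert c B" using edges_sub B'eq by auto
      then show "e \<in> {e \<in> edges X. e \<subseteq> B} \<union> {e \<in> edges X. c \<in> e}" using e by auto
    qed
  qed auto
  have disj: "{e \<in> edges X. e \<subseteq> B} \<inter> {e \<in> edges X. c \<in> e} = {}" using cl(2) by auto
  have "card (edges X) = ecount X B + card {e \<in> edges X. c \<in> e}"
    unfolding ecount_def by (subst split) (rule card_Un_disjoint, use fin_edges disj in auto)
  then have "card (edges X) = ecount X B + card (lkv X {c})" using card_nbr_edges by simp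
  moreover have "card (edges X) + 10 = 4 * card ?V" using ecount_total .
  moreover have "card ?V = Suc (card B)" using B'eq cB' by simp
  moreover have "ecount X B + 10 = 4 * card B" using tB unfolding tight_def by auto
  ultimately have "card (lkv X {c}) = 4" by linarith
  moreover have "{c} \<in> X" using cV vertices_iff by auto
  ultimately show ?thesis by blast
qed

end


lemma link_empty: "link Z {} = Z" unfolding link_def by auto

lemma conn_link_rev:
  assumes sc: "simplicial_complex Z"
    and c: "\<forall>x\<in>lkv Z \<alpha>. \<forall>y\<in>lkv Z \<alpha>. (x,y) \<in> (lrel Z \<alpha>)\<^sup>*"
  shows "connected_complex (link Z \<alpha>)"
  unfolding connected_complex_def
proof (intro ballI)
  fix x y assume x: "x \<in> vertices (link Z \<alpha>)" and y: "y \<in> vertices (link Z \<alpha>)"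
  have vl: "v \<in> lkv Z \<alpha>" if vv: "v \<in> vertices (link Z \<alpha>)" for v
  proof -
    obtain \<beta> where b: "\<beta> \<in> Z" "\<beta> \<inter> \<alpha> = {}" "\<alpha> \<union> \<beta> \<in> Z" "v \<in> \<beta>"
      using vv unfolding vertices_def link_def by blast
    have "insert v \<alpha> \<subseteq> \<alpha> \<union> \<beta>" using b(4) by auto
    then show ?thesis using sc_sub[OF sc b(3)] b unfolding lkv_def by auto
  qed
  have "(x,y) \<in> (lrel Z \<alpha>)\<^sup>*" using c vl x y by auto
  moreover have "lrel Z \<alpha> \<subseteq> {(a, b). {a, b} \<in> edges (link Z \<alpha>)}"
  proof
    fix p assume p: "p \<in> lrel Z \<alpha>"
    obtain a b where ab: "p = (a,b)" by (cases p)
    have h: "a \<noteq> b" "a \<notin> \<alpha>" "b \<notin> \<alpha>" "insert a (insert b \<alpha>) \<in> Z" using p ab unfolding lrel_def by auto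
    have "{a,b} \<in> Z" using sc_sub[OF sc h(4)] by auto
    moreover have "\<alpha> \<union> {a,b} = insert a (insert b \<alpha>)" by auto
    ultimately show "p \<in> {(a, b). {a, b} \<in> edges (link Z \<alpha>)}"
      using h ab unfolding edges_def link_def by auto
  qed
  ultimately show "(x, y) \<in> {(a, b). {a, b} \<in> edges (link Z \<alpha>)}\<^sup>*" using rtrancl_mono by blast
qed

locale red = pm3r +
  fixes u
  assumes uX: "{u} \<in> X" and deg4: "card (lkv X {u}) = 4"
begin

abbreviation "\<sigma> \<equiv> lkv X {u}"

lemma u_notin: "u \<notin> \<sigma>" unfolding lkv_def by auto
lemma fin\<sigma>: "finite \<sigma>" using lkv_fin .

lemma face_u: assumes "\<rho> \<in> X" "u \<in> \<rho>" shows "\<rho> - {u} \<subseteq> \<sigma>"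
proof
  fix z assume z: "z \<in> \<rho> - {u}"
  then have "insert z {u} \<subseteq> \<rho>" using assms(2) by auto
  then show "z \<in> \<sigma>" using sub[OF assms(1)] z unfolding lkv_def by auto
qed

lemma all_tri: assumes t: "\<tau> \<subseteq> \<sigma>" "card \<tau> = 3" shows "insert u \<tau> \<in> X"
proof -
  obtain \<rho>0 where \<rho>0: "\<rho>0 \<in> X" "card \<rho>0 = 4" "{u} \<subseteq> \<rho>0" using in_facet[OF uX] by auto
  have f\<rho>: "finite \<rho>0" using finF \<rho>0(1) .
  let ?t0 = "\<rho>0 - {u}"
  have t0s: "?t0 \<subseteq> \<sigma>" using face_u \<rho>0 by auto
  have ct0: "card ?t0 = 3" using \<rho>0 f\<rho> by auto
  have ut0: "insert u ?t0 = \<rho>0" using \<rho>0(3) by auto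
  show ?thesis
  proof (cases "\<tau> = ?t0")
    case True then show ?thesis using ut0 \<rho>0(1) by simp
  next
    case False
    have "card (\<sigma> - ?t0) = 1" using card_Diff_subset[OF finite_subset[OF t0s fin\<sigma>] t0s] ct0 deg4 by simp
    then obtain d where d: "\<sigma> - ?t0 = {d}" using card_1_singletonE by blast
    have d\<tau>: "d \<in> \<tau>"
    proof (rule ccontr)
      assume "d \<notin> \<tau>"
      then have "\<tau> \<subseteq> ?t0" using t(1) d by auto
      then have "\<tau> = ?t0" using card_seteq[OF finite_subset[OF t0s fin\<sigma>]] t(2) ct0 by auto
      then show False using False by simp
    qed
    let ?e = "\<tau> - {d}"
    have ft: "finite \<tau>" using t(2) card.infinite by fastforce
    have ce: "card ?e = 2" using t(2) d\<tau> ft by auto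
    have et0: "?e \<subseteq> ?t0" using t(1) d by auto
    have "insert u ?e \<subseteq> \<rho>0" using et0 \<rho>0(3) by auto
    then have ueX: "insert u ?e \<in> X" using sub[OF \<rho>0(1)] by auto
    have "u \<notin> ?e" using u_notin t(1) by auto
    then have cue: "card (insert u ?e) = 3" using ce ft by simp
    have lk2: "card (lkv X (insert u ?e)) = 2" using lkv_two[OF ueX cue] .
    have lksub: "lkv X (insert u ?e) \<subseteq> \<sigma> - ?e"
    proof
      fix z assume z: "z \<in> lkv X (insert u ?e)"
      then have "insert z (insert u ?e) \<in> X" "z \<notin> insert u ?e" unfolding lkv_def by auto
      then have "z \<in> \<sigma>" using face_u[of "insert z (insert u ?e)"] by auto
      then show "z \<in> \<sigma> - ?e" using z unfolding lkv_def by auto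
    qed
    have "?e \<subseteq> \<sigma>" using t(1) by auto
    then have "card (\<sigma> - ?e) = 2" using card_Diff_subset[OF finite_subset[OF _ fin\<sigma>]] ce deg4 by auto
    then have "lkv X (insert u ?e) = \<sigma> - ?e"
      using card_seteq[OF _ lksub] lk2 fin\<sigma> by auto
    moreover have "d \<in> \<sigma> - ?e" using d by auto
    ultimately have "insert d (insert u ?e) \<in> X" unfolding lkv_def by auto
    moreover have "insert d (insert u ?e) = insert u \<tau>" using d\<tau> by auto
    ultimately show ?thesis by simp
  qed
qed

lemma proper_u: assumes "\<rho> \<subset> \<sigma>" shows "insert u \<rho> \<in> X"
proof -
  obtain z where z: "z \<in> \<sigma>" "z \<notin> \<rho>" using assms by auto
  have "card (\<sigma> - {z}) = 3" using z deg4 fin\<sigma> by auto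
  then have "insert u (\<sigma> - {z}) \<in> X" using all_tri by auto
  moreover have "insert u \<rho> \<subseteq> insert u (\<sigma> - {z})" using assms z by auto
  ultimately show ?thesis using sub by blast
qed

lemma proper_in: assumes "\<rho> \<subset> \<sigma>" shows "\<rho> \<in> X"
  using sub[OF proper_u[OF assms]] by auto

lemma face_u_eq: "{\<rho>\<in>X. u \<in> \<rho>} = {insert u \<tau> |\<tau>. \<tau> \<subset> \<sigma>}"
proof
  show "{\<rho>\<in>X. u \<in> \<rho>} \<subseteq> {insert u \<tau> |\<tau>. \<tau> \<subset> \<sigma>}"
  proof
    fix \<rho> assume r: "\<rho> \<in> {\<rho>\<in>X. u \<in> \<rho>}"
    then have r1: "\<rho> - {u} \<subseteq> \<sigma>" using face_u by auto
    have "\<rho> - {u} \<noteq> \<sigma>"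
    proof
      assume eq: "\<rho> - {u} = \<sigma>"
      have "card \<rho> \<le> 4" using card_le4 r by auto
      moreover have "\<rho> = insert u \<sigma>" using eq r by auto
      ultimately show False using deg4 u_notin fin\<sigma> by auto
    qed
    then have "\<rho> - {u} \<subset> \<sigma>" using r1 by auto
    moreover have "\<rho> = insert u (\<rho> - {u})" using r by auto
    ultimately show "\<rho> \<in> {insert u \<tau> |\<tau>. \<tau> \<subset> \<sigma>}" by blast
  qed
  show "{insert u \<tau> |\<tau>. \<tau> \<subset> \<sigma>} \<subseteq> {\<rho>\<in>X. u \<in> \<rho>}" using proper_u by auto
qed

end


context pm3 begin
lemma link_cross:
  assumes "\<alpha> \<in> X" "card \<alpha> \<le> 2" "a \<in> lkv X \<alpha>" "a \<in> T" "b \<in> lkv X \<alpha>" "b \<notin> T"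
  shows "\<exists>y w. (y,w) \<in> lrel X \<alpha> \<and> y \<in> T \<and> w \<notin> T"
proof -
  have "(a,b) \<in> (lrel X \<alpha>)\<^sup>*" using link_conn assms by auto
  then show ?thesis by (rule crossing) (use assms in auto)
qed
end

context red begin

lemma base_case: assumes s: "\<sigma> \<in> X" shows "X = standard_sphere (insert u \<sigma>)"
proof -
  let ?S = "insert u \<sigma>"
  have cS: "card ?S = 5" using deg4 u_notin fin\<sigma> by simp
  have finS: "finite ?S" using fin\<sigma> by simp
  have subS: "\<rho> \<in> X" if r: "\<rho> \<subset> ?S" for \<rho>
  proof (cases "u \<in> \<rho>")
    case True
    then have "\<rho> - {u} \<subset> \<sigma>" using r u_notin by auto
    then have "insert u (\<rho> - {u}) \<in> X" by (rule proper_u)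
    then show ?thesis using True by (simp add: insert_absorb)
  next
    case False
    then have "\<rho> \<subseteq> \<sigma>" using r by auto
    then show ?thesis using sub s by auto
  qed
  have VS: "vertices X \<subseteq> ?S"
  proof (rule ccontr)
    assume "\<not> ?thesis"
    then obtain w0 where w0: "w0 \<in> vertices X" "w0 \<notin> ?S" by auto
    have uV: "u \<in> vertices X" using uX vertices_iff by auto
    have "\<exists>y w. (y,w) \<in> lrel X {} \<and> y \<in> ?S \<and> w \<notin> ?S"
      by (rule link_cross[where \<alpha> = "{}" and a = u and b = w0]) (use empty_in uV w0 lkv_empty in auto)
    then obtain y w where yw: "(y,w) \<in> lrel X {}" "y \<in> ?S" "w \<notin> ?S" by blast
    have yw1: "y \<noteq> w" "insert y {w} \<in> X" using yw(1) unfolding lrel_def by auto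
    have yu: "y \<noteq> u"
    proof
      assume "y = u"
      then have "w \<in> \<sigma>" using yw1 unfolding lkv_def by (auto simp: insert_commute)
      then show False using yw(3) by auto
    qed
    then have ys: "y \<in> \<sigma>" using yw(2) by auto
    have yX: "{y} \<in> X" using sub[OF yw1(2)] by auto
    have ul: "u \<in> lkv X {y}" using ys unfolding lkv_def by (auto simp: insert_commute)
    have wl: "w \<in> lkv X {y}" using yw1 unfolding lkv_def by (auto simp: insert_commute)
    have "\<exists>y' w'. (y',w') \<in> lrel X {y} \<and> y' \<in> ?S \<and> w' \<notin> ?S"
      by (rule link_cross[where \<alpha> = "{y}" and a = u and b = w]) (use yX ul wl yw(3) in auto)
    then obtain y' w' where yw': "(y',w') \<in> lrel X {y}" "y' \<in> ?S" "w' \<notin> ?S" by blast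
    have yw'1: "y' \<noteq> y" "w' \<noteq> y" "insert y' (insert w' {y}) \<in> X" using yw' unfolding lrel_def by auto
    have yyX: "{y,y'} \<in> X" using sub[OF yw'1(3)] by auto
    have cyy: "card {y,y'} = 2" using yw'1 by auto
    have yyS: "{y,y'} \<subseteq> ?S" using ys yw'(2) by auto
    have "card (?S - {y,y'}) = 3" using card_Diff_subset[OF _ yyS] cS cyy by auto
    then have "?S - {y,y'} \<noteq> {}" by (metis card.empty zero_neq_numeral)
    then obtain z where z: "z \<in> ?S" "z \<notin> {y,y'}" by auto
    have "insert z {y,y'} \<subset> ?S"
    proof -
      have "insert z {y,y'} \<subseteq> ?S" using z yyS by auto
      moreover have "card (insert z {y,y'}) = 3" using z cyy by auto
      ultimately show ?thesis using cS by auto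
    qed
    then have zl: "z \<in> lkv X {y,y'}" using subS z unfolding lkv_def by auto
    have w'l: "w' \<in> lkv X {y,y'}" using yw'1 yw'(3) yyS unfolding lkv_def by (auto simp: insert_commute)
    have "\<exists>z' w''. (z',w'') \<in> lrel X {y,y'} \<and> z' \<in> ?S \<and> w'' \<notin> ?S"
      by (rule link_cross[where \<alpha> = "{y,y'}" and a = z and b = w']) (use yyX cyy zl z(1) w'l yw'(3) in auto)
    then obtain z' w'' where zw: "(z',w'') \<in> lrel X {y,y'}" "z' \<in> ?S" "w'' \<notin> ?S" by blast
    have zw1: "z' \<notin> {y,y'}" "w'' \<notin> {y,y'}" "insert z' (insert w'' {y,y'}) \<in> X" using zw(1) unfolding lrel_def by auto
    let ?\<tau> = "insert z' {y,y'}"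
    have \<tau>S: "?\<tau> \<subseteq> ?S" using zw(2) yyS by auto
    have c\<tau>: "card ?\<tau> = 3" using zw1(1) cyy by auto
    have \<tau>X: "?\<tau> \<in> X" using sub[OF zw1(3)] by auto
    have l2: "card (lkv X ?\<tau>) = 2" using lkv_two[OF \<tau>X c\<tau>] .
    have "?S - ?\<tau> \<subseteq> lkv X ?\<tau>"
    proof
      fix a assume a: "a \<in> ?S - ?\<tau>"
      have "insert a ?\<tau> \<subseteq> ?S" using a \<tau>S by auto
      moreover have "card (insert a ?\<tau>) = 4" using a c\<tau> by auto
      ultimately have "insert a ?\<tau> \<subset> ?S" using cS by auto
      then show "a \<in> lkv X ?\<tau>" using subS a unfolding lkv_def by auto
    qed
    moreover have "w'' \<in> lkv X ?\<tau>" using zw1 zw(1) unfolding lkv_def lrel_def by (auto simp: insert_commute)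
    ultimately have "insert w'' (?S - ?\<tau>) \<subseteq> lkv X ?\<tau>" by auto
    moreover have "card (insert w'' (?S - ?\<tau>)) = 3"
    proof -
      have "card (?S - ?\<tau>) = 2" using card_Diff_subset[OF _ \<tau>S] cS c\<tau> by auto
      moreover have "w'' \<notin> ?S - ?\<tau>" using zw(3) by auto
      ultimately show ?thesis using finS by auto
    qed
    ultimately have "3 \<le> card (lkv X ?\<tau>)" using card_mono[OF lkv_fin] by metis
    then show False using l2 by simp
  qed
  show ?thesis
  proof
    show "X \<subseteq> standard_sphere ?S"
    proof
      fix \<rho> assume r: "\<rho> \<in> X"
      then have "\<rho> \<subseteq> ?S" using VS unfolding vertices_def by auto
      moreover have "\<rho> \<noteq> ?S" using card_le4[OF r] cS by auto
      ultimately show "\<rho> \<in> standard_sphere ?S" unfolding standard_sphere_def by auto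
    qed
    show "standard_sphere ?S \<subseteq> X" using subS unfolding standard_sphere_def by auto
  qed
qed

end


lemma pure_from:
  assumes sc: "simplicial_complex Z" and inf: "\<forall>\<rho>\<in>Z. \<exists>\<sigma>\<in>Z. card \<sigma> = 4 \<and> \<rho> \<subseteq> \<sigma>"
    and le: "\<forall>\<rho>\<in>Z. card \<rho> \<le> 4" and ne: "Z \<noteq> {}"
  shows "facets Z = {\<sigma>\<in>Z. card \<sigma> = 4}" "pure_dim 3 Z"
proof -
  show fe: "facets Z = {\<sigma>\<in>Z. card \<sigma> = 4}"
  proof
    show "facets Z \<subseteq> {\<sigma>\<in>Z. card \<sigma> = 4}"
    proof
      fix m assume m: "m \<in> facets Z"
      then have mZ: "m \<in> Z" "\<forall>\<tau>\<in>Z. m \<subseteq> \<tau> \<longrightarrow> \<tau> = m" unfolding facets_def by auto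
      obtain \<sigma> where "\<sigma> \<in> Z" "card \<sigma> = 4" "m \<subseteq> \<sigma>" using inf mZ(1) by auto
      then show "m \<in> {\<sigma>\<in>Z. card \<sigma> = 4}" using mZ by auto
    qed
    show "{\<sigma>\<in>Z. card \<sigma> = 4} \<subseteq> facets Z"
    proof
      fix \<sigma> assume s: "\<sigma> \<in> {\<sigma>\<in>Z. card \<sigma> = 4}"
      have "\<forall>\<tau>\<in>Z. \<sigma> \<subseteq> \<tau> \<longrightarrow> \<tau> = \<sigma>"
      proof (intro ballI impI)
        fix \<tau> assume t: "\<tau> \<in> Z" "\<sigma> \<subseteq> \<tau>"
        have "finite \<tau>" using sc_fin[OF sc t(1)] .
        then show "\<tau> = \<sigma>" using card_seteq[of \<tau> \<sigma>] t s le by auto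
      qed
      then show "\<sigma> \<in> facets Z" using s unfolding facets_def by auto
    qed
  qed
  obtain \<rho> where "\<rho> \<in> Z" using ne by auto
  then obtain \<sigma> where "\<sigma> \<in> Z" "card \<sigma> = 4" using inf by auto
  then show "pure_dim 3 Z" unfolding pure_dim_def fe by auto
qed

definition delv :: "'a set set \<Rightarrow> 'a \<Rightarrow> 'a set set" where
  "delv X u = {\<rho>\<in>X. u \<notin> \<rho>} \<union> {lkv X {u}}"

context red begin

abbreviation "Y \<equiv> delv X u"

lemma Y_mem: "\<rho> \<in> Y \<longleftrightarrow> (\<rho> \<in> X \<and> u \<notin> \<rho>) \<or> \<rho> = \<sigma>"
  unfolding delv_def by auto

lemma Y_sc: "simplicial_complex Y"
  unfolding simplicial_complex_def
proof (intro conjI ballI allI impI)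
  show "finite Y" unfolding delv_def using finX by auto
  fix \<rho> assume r: "\<rho> \<in> Y"
  then show "finite \<rho>" using Y_mem finF fin\<sigma> by auto
  fix \<tau> assume t: "\<tau> \<subseteq> \<rho>"
  show "\<tau> \<in> Y"
  proof (cases "\<rho> = \<sigma>")
    case True
    show ?thesis
    proof (cases "\<tau> = \<sigma>")
      case True then show ?thesis using Y_mem by auto
    next
      case False
      then have "\<tau> \<subset> \<sigma>" using t \<open>\<rho> = \<sigma>\<close> by auto
      then show ?thesis using proper_in u_notin Y_mem by auto
    qed
  next
    case False
    then show ?thesis using r t Y_mem sub by auto
  qed
qed

lemma \<sigma>_card: "card \<sigma> = 4" using deg4 .

lemma Y_facets: "facets Y = {\<rho>\<in>Y. card \<rho> = 4}" and Y_pure: "pure_dim 3 Y"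
proof -
  have inf: "\<forall>\<rho>\<in>Y. \<exists>\<tau>\<in>Y. card \<tau> = 4 \<and> \<rho> \<subseteq> \<tau>"
  proof
    fix \<rho> assume r: "\<rho> \<in> Y"
    show "\<exists>\<tau>\<in>Y. card \<tau> = 4 \<and> \<rho> \<subseteq> \<tau>"
    proof (cases "\<rho> = \<sigma>")
      case True then show ?thesis using \<sigma>_card Y_mem by auto
    next
      case False
      then have r1: "\<rho> \<in> X" "u \<notin> \<rho>" using r Y_mem by auto
      obtain \<tau> where t: "\<tau> \<in> X" "card \<tau> = 4" "\<rho> \<subseteq> \<tau>" using in_facet[OF r1(1)] by auto
      show ?thesis
      proof (cases "u \<in> \<tau>")
        case True
        then have "\<rho> \<subseteq> \<sigma>" using face_u[OF t(1)] t(3) r1(2) by auto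
        then show ?thesis using \<sigma>_card Y_mem by auto
      next
        case False then show ?thesis using t Y_mem by auto
      qed
    qed
  qed
  have le: "\<forall>\<rho>\<in>Y. card \<rho> \<le> 4" using Y_mem card_le4 \<sigma>_card by auto
  have ne: "Y \<noteq> {}" using Y_mem by auto
  show "facets Y = {\<rho>\<in>Y. card \<rho> = 4}" using pure_from[OF Y_sc inf le ne] by auto
  show "pure_dim 3 Y" using pure_from[OF Y_sc inf le ne] by auto
qed

end


locale red2 = red +
  assumes notX: "lkv X {u} \<notin> X"
begin

lemma Y_two: assumes t: "\<tau> \<in> Y" "card \<tau> = 3" shows "card {\<rho> \<in> facets Y. \<tau> \<subseteq> \<rho>} = 2"
proof -
  have tX: "\<tau> \<in> X" "u \<notin> \<tau>" using t Y_mem \<sigma>_card by auto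
  let ?AX = "{\<rho>\<in>X. card \<rho> = 4 \<and> \<tau> \<subseteq> \<rho>}"
  have cAX: "card ?AX = 2" using two[OF tX(1) t(2)] .
  have finAX: "finite ?AX" using finX by auto
  have AY: "{\<rho> \<in> facets Y. \<tau> \<subseteq> \<rho>} = {\<rho> \<in> Y. card \<rho> = 4 \<and> \<tau> \<subseteq> \<rho>}" using Y_facets by auto
  show ?thesis
  proof (cases "\<tau> \<subseteq> \<sigma>")
    case True
    have ut: "insert u \<tau> \<in> ?AX" using all_tri[OF True t(2)] tX t(2) finF[OF tX(1)] by auto
    have eq: "{\<rho> \<in> Y. card \<rho> = 4 \<and> \<tau> \<subseteq> \<rho>} = insert \<sigma> (?AX - {insert u \<tau>})"
    proof
      show "{\<rho> \<in> Y. card \<rho> = 4 \<and> \<tau> \<subseteq> \<rho>} \<subseteq> insert \<sigma> (?AX - {insert u \<tau>})"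
        using Y_mem tX(2) by auto
      show "insert \<sigma> (?AX - {insert u \<tau>}) \<subseteq> {\<rho> \<in> Y. card \<rho> = 4 \<and> \<tau> \<subseteq> \<rho>}"
      proof
        fix \<rho> assume r: "\<rho> \<in> insert \<sigma> (?AX - {insert u \<tau>})"
        show "\<rho> \<in> {\<rho> \<in> Y. card \<rho> = 4 \<and> \<tau> \<subseteq> \<rho>}"
        proof (cases "\<rho> = \<sigma>")
          case True then show ?thesis using Y_mem \<sigma>_card \<open>\<tau> \<subseteq> \<sigma>\<close> by auto
        next
          case False
          then have r1: "\<rho> \<in> X" "card \<rho> = 4" "\<tau> \<subseteq> \<rho>" "\<rho> \<noteq> insert u \<tau>" using r by auto
          have "u \<notin> \<rho>"
          proof
            assume ur: "u \<in> \<rho>"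
            have fr: "finite \<rho>" using finF r1(1) .
            have "\<tau> \<subseteq> \<rho> - {u}" using r1(3) tX(2) by auto
            moreover have "card (\<rho> - {u}) = 3" using ur r1(2) fr by auto
            ultimately have "\<tau> = \<rho> - {u}" using card_seteq[of "\<rho> - {u}" \<tau>] fr t(2) by auto
            then have "\<rho> = insert u \<tau>" using ur by auto
            then show False using r1(4) by simp
          qed
          then show ?thesis using r1 Y_mem by auto
        qed
      qed
    qed
    have "card (?AX - {insert u \<tau>}) = 1" using cAX ut finAX by simp
    moreover have "\<sigma> \<notin> ?AX - {insert u \<tau>}" using notX by auto
    moreover have "finite (?AX - {insert u \<tau>})" using finAX by auto
    ultimately show ?thesis unfolding AY eq by simp
  next
    case False
    have "{\<rho> \<in> Y. card \<rho> = 4 \<and> \<tau> \<subseteq> \<rho>} = ?AX"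
    proof
      show "{\<rho> \<in> Y. card \<rho> = 4 \<and> \<tau> \<subseteq> \<rho>} \<subseteq> ?AX" using Y_mem False by auto
      show "?AX \<subseteq> {\<rho> \<in> Y. card \<rho> = 4 \<and> \<tau> \<subseteq> \<rho>}"
      proof
        fix \<rho> assume r: "\<rho> \<in> ?AX"
        have "u \<notin> \<rho>"
        proof
          assume "u \<in> \<rho>"
          then have "\<rho> - {u} \<subseteq> \<sigma>" using face_u r by auto
          then show False using False r tX(2) by auto
        qed
        then show "\<rho> \<in> {\<rho> \<in> Y. card \<rho> = 4 \<and> \<tau> \<subseteq> \<rho>}" using r Y_mem by auto
      qed
    qed
    then show ?thesis unfolding AY using cAX by simp
  qed
qed

lemma lkvY: assumes "\<alpha> \<in> X" "u \<notin> \<alpha>" "card \<alpha> \<le> 2" shows "lkv Y \<alpha> = lkv X \<alpha> - {u}"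
proof
  show "lkv Y \<alpha> \<subseteq> lkv X \<alpha> - {u}"
  proof
    fix w assume w: "w \<in> lkv Y \<alpha>"
    then have h: "w \<notin> \<alpha>" "insert w \<alpha> \<in> Y" unfolding lkv_def by auto
    have fa: "finite \<alpha>" using finF assms(1) .
    have "insert w \<alpha> \<noteq> \<sigma>"
    proof
      assume "insert w \<alpha> = \<sigma>"
      moreover have "card (insert w \<alpha>) \<le> Suc (card \<alpha>)" using fa by (simp add: card_insert_if)
      ultimately have "card \<sigma> \<le> 3" using assms(3) by simp
      then show False using \<sigma>_card by simp
    qed
    then show "w \<in> lkv X \<alpha> - {u}" using h Y_mem unfolding lkv_def by auto
  qed
  show "lkv X \<alpha> - {u} \<subseteq> lkv Y \<alpha>" using assms(2) Y_mem unfolding lkv_def by auto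
qed

lemma Y_links: assumes a: "\<alpha> \<in> Y" "card \<alpha> \<le> 2" shows "connected_complex (link Y \<alpha>)"
proof -
  have aX: "\<alpha> \<in> X" "u \<notin> \<alpha>" using a Y_mem \<sigma>_card by auto
  show ?thesis
  proof (rule conn_link_rev[OF Y_sc], intro ballI)
    fix x y assume x: "x \<in> lkv Y \<alpha>" and y: "y \<in> lkv Y \<alpha>"
    have xy: "x \<in> lkv X \<alpha>" "x \<noteq> u" "y \<in> lkv X \<alpha>" "y \<noteq> u" using x y lkvY[OF aX a(2)] by auto
    have "(x,y) \<in> (lrel X \<alpha>)\<^sup>*" using link_conn[OF aX(1) a(2) xy(1) xy(3)] .
    then show "(x,y) \<in> (lrel Y \<alpha>)\<^sup>*"
    proof (rule del_conn[where u = u])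
      show "x \<noteq> u" "y \<noteq> u" using xy by auto
      fix a b
      show "(a,b) \<in> lrel X \<alpha> \<Longrightarrow> a \<noteq> u \<Longrightarrow> b \<noteq> u \<Longrightarrow> (a,b) \<in> lrel Y \<alpha>"
      proof -
        assume ab: "(a,b) \<in> lrel X \<alpha>" "a \<noteq> u" "b \<noteq> u"
        have h: "a \<noteq> b" "a \<notin> \<alpha>" "b \<notin> \<alpha>" "insert a (insert b \<alpha>) \<in> X" using ab(1) unfolding lrel_def by auto
        have "u \<notin> insert a (insert b \<alpha>)" using ab(2,3) aX(2) by simp
        then have "insert a (insert b \<alpha>) \<in> Y" using h(4) unfolding Y_mem by blast
        then show "(a,b) \<in> lrel Y \<alpha>" using h(1-3) unfolding lrel_def by blast
      qed
      assume h: "(a,u) \<in> lrel X \<alpha>" "(u,b) \<in> lrel X \<alpha>" "a \<noteq> u" "b \<noteq> u" "a \<noteq> b"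
      have h1: "insert a (insert u \<alpha>) \<in> X" "a \<notin> \<alpha>" using h(1) unfolding lrel_def by auto
      have h2: "insert u (insert b \<alpha>) \<in> X" "b \<notin> \<alpha>" using h(2) unfolding lrel_def by auto
      have "insert a (insert u \<alpha>) - {u} \<subseteq> \<sigma>" using face_u[OF h1(1)] by auto
      moreover have "insert u (insert b \<alpha>) - {u} \<subseteq> \<sigma>" using face_u[OF h2(1)] by auto
      moreover have "insert a (insert b \<alpha>) \<subseteq> (insert a (insert u \<alpha>) - {u}) \<union> (insert u (insert b \<alpha>) - {u})"
        using h(3,4) aX(2) by blast
      ultimately have "insert a (insert b \<alpha>) \<subseteq> \<sigma>" by blast
      moreover have "\<sigma> \<in> Y" unfolding Y_mem by blast
      ultimately have "insert a (insert b \<alpha>) \<in> Y" using sc_sub[OF Y_sc] by blast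
      then show "(a,b) \<in> lrel Y \<alpha>" using h(5) h1(2) h2(2) unfolding lrel_def by blast
    qed
  qed
qed

lemma Y_npm: "normal_pseudomanifold 3 Y"
  unfolding normal_pseudomanifold_def
proof (intro conjI ballI impI)
  show "(1::nat) \<le> 3" by simp
  show "simplicial_complex Y" using Y_sc .
  show "pure_dim 3 Y" using Y_pure .
  fix \<tau> assume "\<tau> \<in> Y"
  show "card \<tau> = 3 \<Longrightarrow> card {\<rho> \<in> facets Y. \<tau> \<subseteq> \<rho>} = 2" using Y_two \<open>\<tau> \<in> Y\<close> by auto
  show "card \<tau> + 1 \<le> 3 \<Longrightarrow> connected_complex (link Y \<tau>)" using Y_links \<open>\<tau> \<in> Y\<close> by auto
qed

end


context red2 begin

lemma \<sigma>_sub_V: "\<sigma> \<subseteq> vertices X"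
proof
  fix y assume "y \<in> \<sigma>"
  then have "insert y {u} \<in> X" unfolding lkv_def by blast
  then show "y \<in> vertices X" unfolding vertices_def by blast
qed

lemma uV: "u \<in> vertices X" using uX vertices_iff by blast

lemma Y_vertices: "vertices Y = vertices X - {u}"
proof
  show "vertices Y \<subseteq> vertices X - {u}"
  proof
    fix x assume "x \<in> vertices Y"
    then obtain \<rho> where r: "\<rho> \<in> Y" "x \<in> \<rho>" unfolding vertices_def by blast
    have "(\<rho> \<in> X \<and> u \<notin> \<rho>) \<or> \<rho> = \<sigma>" using r(1) unfolding Y_mem by blast
    then show "x \<in> vertices X - {u}"
    proof
      assume "\<rho> \<in> X \<and> u \<notin> \<rho>" then show ?thesis using r(2) unfolding vertices_def by blast
    next
      assume "\<rho> = \<sigma>" then show ?thesis using r(2) \<sigma>_sub_V u_notin by blast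
    qed
  qed
  show "vertices X - {u} \<subseteq> vertices Y"
  proof
    fix x assume x: "x \<in> vertices X - {u}"
    then have "{x} \<in> X" using vertices_iff by blast
    moreover have "u \<notin> {x}" using x by blast
    ultimately have "{x} \<in> Y" unfolding Y_mem by blast
    then show "x \<in> vertices Y" unfolding vertices_def by blast
  qed
qed

lemma Y_edges: "edges Y = {e \<in> edges X. u \<notin> e}"
proof
  show "edges Y \<subseteq> {e \<in> edges X. u \<notin> e}"
  proof
    fix e assume e: "e \<in> edges Y"
    then have e2: "e \<in> Y" "card e = 2" unfolding edges_def by auto
    have "(e \<in> X \<and> u \<notin> e) \<or> e = \<sigma>" using e2(1) unfolding Y_mem by blast
    moreover have "e \<noteq> \<sigma>" using e2(2) \<sigma>_card by auto
    ultimately show "e \<in> {e \<in> edges X. u \<notin> e}" using e2(2) unfolding edges_def by blast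
  qed
  show "{e \<in> edges X. u \<notin> e} \<subseteq> edges Y"
  proof
    fix e assume e: "e \<in> {e \<in> edges X. u \<notin> e}"
    then have "e \<in> X" "u \<notin> e" "card e = 2" unfolding edges_def by auto
    then show "e \<in> edges Y" unfolding edges_def Y_mem by blast
  qed
qed

lemma Y_card_edges: "card (edges Y) + 4 = card (edges X)"
proof -
  have split: "edges X = {e \<in> edges X. u \<notin> e} \<union> {e \<in> edges X. u \<in> e}" by blast
  have "card (edges X) = card {e \<in> edges X. u \<notin> e} + card {e \<in> edges X. u \<in> e}"
    by (subst split, rule card_Un_disjoint) (use fin_edges in auto)
  then show ?thesis using Y_edges card_nbr_edges deg4 by simp
qed

lemma Y_card_vertices: "card (vertices Y) + 1 = card (vertices X)"
proof -
  have "card (vertices X) > 0" using uV finV card_gt_0_iff by blast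
  then show ?thesis using Y_vertices uV finV by (simp add: card_Diff_singleton)
qed

lemma Y_connected: "connected_complex Y"
proof -
  have "{} \<in> Y" using empty_in unfolding Y_mem by blast
  then have "connected_complex (link Y {})" using Y_links by simp
  then show ?thesis by (simp add: link_empty)
qed

lemma Y_rigid: "rigid 4 3 Y"
  unfolding rigid_def
proof (intro conjI allI impI)
  show "connected_complex Y" using Y_connected .
  fix A assume AV: "A \<subseteq> vertices Y" and ex: "\<exists>\<rho>\<in>Y. card \<rho> = 3 + 1 \<and> A \<inter> \<rho> = {}"
  have AV': "A \<subseteq> vertices X" "u \<notin> A" using AV Y_vertices by auto
  have H: "\<forall>A. A \<subseteq> vertices X \<longrightarrow> (\<exists>\<sigma>\<in>X. card \<sigma> = 3 + 1 \<and> A \<inter> \<sigma> = {}) \<longrightarrow>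
        4 * card A \<le> card {e \<in> edges X. e \<inter> A \<noteq> {}}" using rig unfolding rigid_def by blast
  show "4 * card A \<le> card {e \<in> edges Y. e \<inter> A \<noteq> {}}"
  proof (cases "A \<inter> \<sigma> = {}")
    case True
    obtain z where z: "z \<in> \<sigma>" using \<sigma>_card by (metis card.empty ex_in_conv zero_neq_numeral)
    have "card (\<sigma> - {z}) = 3" using z \<sigma>_card fin\<sigma> by simp
    then have ins: "insert u (\<sigma> - {z}) \<in> X" using all_tri by blast
    have "card (insert u (\<sigma> - {z})) = 4" using \<open>card (\<sigma> - {z}) = 3\<close> u_notin fin\<sigma> by simp
    moreover have "A \<inter> insert u (\<sigma> - {z}) = {}" using True AV'(2) by blast
    ultimately have "4 * card A \<le> card {e \<in> edges X. e \<inter> A \<noteq> {}}" using H AV'(1) ins by auto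
    moreover have "{e \<in> edges X. e \<inter> A \<noteq> {}} = {e \<in> edges Y. e \<inter> A \<noteq> {}}"
    proof
      show "{e \<in> edges X. e \<inter> A \<noteq> {}} \<subseteq> {e \<in> edges Y. e \<inter> A \<noteq> {}}"
      proof
        fix e assume e: "e \<in> {e \<in> edges X. e \<inter> A \<noteq> {}}"
        have "u \<notin> e"
        proof
          assume ue: "u \<in> e"
          have "e - {u} \<subseteq> \<sigma>" using face_u[of e] e ue unfolding edges_def by blast
          then show False using e True AV'(2) by blast
        qed
        then show "e \<in> {e \<in> edges Y. e \<inter> A \<noteq> {}}" using e Y_edges by blast
      qed
      show "{e \<in> edges Y. e \<inter> A \<noteq> {}} \<subseteq> {e \<in> edges X. e \<inter> A \<noteq> {}}" using Y_edges by blast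
    qed
    ultimately show ?thesis by simp
  next
    case False
    obtain \<rho> where r: "\<rho> \<in> Y" "card \<rho> = 4" "A \<inter> \<rho> = {}" using ex by auto
    have "\<rho> \<noteq> \<sigma>" using r(3) False by blast
    then have rX: "\<rho> \<in> X" "u \<notin> \<rho>" using r(1) unfolding Y_mem by blast+
    let ?A' = "insert u A"
    have A'V: "?A' \<subseteq> vertices X" using AV'(1) uV by blast
    have "?A' \<inter> \<rho> = {}" using r(3) rX(2) by blast
    then have ex': "\<exists>\<sigma>\<in>X. card \<sigma> = 3 + 1 \<and> ?A' \<inter> \<sigma> = {}" using rX(1) r(2) by auto
    have ge: "4 * card ?A' \<le> card {e \<in> edges X. e \<inter> ?A' \<noteq> {}}" using H[rule_format, OF A'V ex'] .
    have split: "{e \<in> edges X. e \<inter> ?A' \<noteq> {}} = {e \<in> edges Y. e \<inter> A \<noteq> {}} \<union> {e \<in> edges X. u \<in> e}"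
      using Y_edges by blast
    have "card {e \<in> edges X. e \<inter> ?A' \<noteq> {}} = card {e \<in> edges Y. e \<inter> A \<noteq> {}} + card {e \<in> edges X. u \<in> e}"
      by (subst split, rule card_Un_disjoint) (use fin_edges Y_edges in auto)
    moreover have "card {e \<in> edges X. u \<in> e} = 4" using card_nbr_edges deg4 by simp
    moreover have "card ?A' = Suc (card A)" using AV'(2) finite_subset[OF AV'(1) finV] by simp
    ultimately show ?thesis using ge by simp
  qed
qed

lemma Y_mr: "minimally_rigid 4 3 Y"
  unfolding minimally_rigid_def
proof (intro conjI)
  show "rigid 4 3 Y" using Y_rigid .
  have "((3 + 1::nat) choose 2) = 6" by (simp add: numeral_eq_Suc)
  moreover have "card (edges X) + 10 = 4 * card (vertices X)" using ecount_total .
  ultimately show "int (card (edges Y)) = (int (card (vertices Y)) - int 3 - 1) * int 4 + int ((3 + 1) choose 2)"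
    using Y_card_edges Y_card_vertices by simp
qed

lemma Y_star: "star_vertex Y \<sigma> u = X"
proof -
  have "Y - {\<sigma>} = {\<rho>\<in>X. u \<notin> \<rho>}" using notX unfolding delv_def by blast
  then have "star_vertex Y \<sigma> u = {\<rho>\<in>X. u \<notin> \<rho>} \<union> {\<rho>\<in>X. u \<in> \<rho>}"
    unfolding star_vertex_def face_u_eq by simp
  then show ?thesis by blast
qed

lemma Y_facet: "\<sigma> \<in> facets Y" using Y_facets \<sigma>_card unfolding Y_mem by blast

lemma u_notY: "u \<notin> vertices Y" using Y_vertices by blast

end


lemma main_ind:
  "\<forall>X::'a set set. card (vertices X) = n \<longrightarrow> normal_pseudomanifold 3 X \<longrightarrow> minimally_rigid 4 3 X
     \<longrightarrow> X \<in> stacked_sphere 3"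
proof (induction n rule: less_induct)
  case (less n)
  show ?case
  proof (intro allI impI)
    fix X :: "'a set set"
    assume n: "card (vertices X) = n" and npm: "normal_pseudomanifold 3 X" and mr: "minimally_rigid 4 3 X"
    interpret pm3r X using npm mr by (simp add: pm3r_def pm3_def pm3r_axioms_def)
    obtain u where u: "{u} \<in> X" "card (lkv X {u}) = 4" using deg4_exists by blast
    interpret red X u using u by (simp add: red_def red_axioms_def pm3r_axioms)
    show "X \<in> stacked_sphere 3"
    proof (cases "lkv X {u} \<in> X")
      case True
      obtain S where S: "S = insert u (lkv X {u})" by blast
      have eq: "X = standard_sphere S" using base_case True S by blast
      have "finite S" using fin\<sigma> S by simp
      moreover have "card S = 3 + 2" using u(2) u_notin fin\<sigma> S by simp
      ultimately have "standard_sphere S \<in> stacked_sphere 3" by (rule stacked_sphere.base)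
      then show ?thesis using eq by metis
    next
      case False
      interpret red2 X u using False by (simp add: red2_def red2_axioms_def red_axioms)
      have "delv X u \<in> stacked_sphere 3"
        using less.IH[of "card (vertices (delv X u))"] Y_card_vertices n Y_npm Y_mr by auto
      then have "star_vertex (delv X u) (lkv X {u}) u \<in> stacked_sphere 3"
        by (rule stacked_sphere.star) (use Y_facet \<sigma>_card u_notY in auto)
      then show ?thesis using Y_star by simp
    qed
  qed
qed

theorem lemma7p6:
  fixes X :: "'a set set"
  assumes "normal_pseudomanifold 3 X"
    and "minimally_rigid 4 3 X"
  shows "X \<in> stacked_sphere 3"
  using main_ind assms by blast


end
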